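(* Let $M$ be a von Neumann algebra acting on a Hilbert space $H$ and let $a, b \in [0,1]_M$ be strict in $M$. Then: (1) $a^{1/2}$ is strict in $M$; (2) if $ab = ba$, then $ab$ is strict in $M$.
   Context: $[0,1]_M = \{x \in M : 0 \le x \le 1\}$, and $\mathcal{P}(M)$ is the set of projections of $M$. For $x \in [0,1]_M$ define $s(x) = \sup\{q \in \mathcal{P}(M) : q \le x\}$ and $n(x) = \sup\{q \in \mathcal{P}(M) : qx = 0\}$; $x$ is called strict in $M$ if $s(x) = 0$ and $n(x) = 0$. *)

theory Defs
  imports Complex_Main
begin

class chilbert = ab_group_add +
  fixes scaleC :: "complex \<Rightarrow> 'a \<Rightarrow> 'a" (infixr \<open>*\<^sub>C\<close> 75)
    and cinner :: "'a \<Rightarrow> 'a \<Rightarrow> complex"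
  assumes scaleC_add_right: "c *\<^sub>C (x + y) = c *\<^sub>C x + c *\<^sub>C y"
    and scaleC_add_left: "(c + d) *\<^sub>C x = c *\<^sub>C x + d *\<^sub>C x"
    and scaleC_scaleC: "c *\<^sub>C (d *\<^sub>C x) = (c * d) *\<^sub>C x"
    and scaleC_one: "1 *\<^sub>C x = x"
    and cinner_add_right: "cinner x (y + z) = cinner x y + cinner x z"
    and cinner_scaleC_right: "cinner x (c *\<^sub>C y) = c * cinner x y"
    and cinner_commute: "cinner y x = cnj (cinner x y)"
    and cinner_nonneg: "Im (cinner x x) = 0 \<and> Re (cinner x x) \<ge> 0"
    and cinner_eq_zero: "cinner x x = 0 \<longleftrightarrow> x = 0"
    and complete: "(\<forall>e>0. \<exists>N::nat. \<forall>m\<ge>N. \<forall>n\<ge>N. sqrt (Re (cinner ((X::nat\<Rightarrow>'a) m - X n) (X m - X n))) < e)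
        \<Longrightarrow> (\<exists>L. \<forall>e>0. \<exists>N::nat. \<forall>n\<ge>N. sqrt (Re (cinner (X n - L) (X n - L))) < e)"

definition cnorm :: "'a::chilbert \<Rightarrow> real" where
  "cnorm x = sqrt (Re (cinner x x))"

text \<open>Operators are represented as functions on the space; multiplication is composition.\<close>

definition bounded_op :: "('a::chilbert \<Rightarrow> 'a) \<Rightarrow> bool" where
  "bounded_op T \<longleftrightarrow> (\<forall>x y. T (x + y) = T x + T y) \<and> (\<forall>c x. T (c *\<^sub>C x) = c *\<^sub>C T x)
     \<and> (\<exists>K. \<forall>x. cnorm (T x) \<le> K * cnorm x)"

definition adj :: "('a::chilbert \<Rightarrow> 'a) \<Rightarrow> ('a \<Rightarrow> 'a)" where
  "adj T = (THE S. \<forall>x y. cinner (S x) y = cinner x (T y))"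

definition commutant :: "('a::chilbert \<Rightarrow> 'a) set \<Rightarrow> ('a \<Rightarrow> 'a) set" where
  "commutant S = {T. bounded_op T \<and> (\<forall>A\<in>S. T \<circ> A = A \<circ> T)}"

text \<open>A von Neumann algebra on the Hilbert space: a self-adjoint set of bounded operators
  equal to its bicommutant (von Neumann's bicommutant characterisation).\<close>

definition von_neumann_algebra :: "('a::chilbert \<Rightarrow> 'a) set \<Rightarrow> bool" where
  "von_neumann_algebra M \<longleftrightarrow> (\<forall>T\<in>M. adj T \<in> M) \<and> commutant (commutant M) = M"

definition zero_op :: "'a::chilbert \<Rightarrow> 'a" where
  "zero_op = (\<lambda>_. 0)"

definition positive_op :: "('a::chilbert \<Rightarrow> 'a) \<Rightarrow> bool" where
  "positive_op T \<longleftrightarrow> bounded_op T \<and> (\<forall>x. Im (cinner x (T x)) = 0 \<and> Re (cinner x (T x)) \<ge> 0)"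

definition op_le :: "('a::chilbert \<Rightarrow> 'a) \<Rightarrow> ('a \<Rightarrow> 'a) \<Rightarrow> bool" where
  "op_le A B \<longleftrightarrow> bounded_op A \<and> bounded_op B \<and> positive_op (\<lambda>x. B x - A x)"

definition unit_interval :: "('a::chilbert \<Rightarrow> 'a) set \<Rightarrow> ('a \<Rightarrow> 'a) set" where
  "unit_interval M = {x\<in>M. op_le zero_op x \<and> op_le x id}"

definition projections :: "('a::chilbert \<Rightarrow> 'a) set \<Rightarrow> ('a \<Rightarrow> 'a) set" where
  "projections M = {p\<in>M. p \<circ> p = p \<and> adj p = p}"

definition proj_sup :: "('a::chilbert \<Rightarrow> 'a) set \<Rightarrow> ('a \<Rightarrow> 'a) set \<Rightarrow> ('a \<Rightarrow> 'a)" where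
  "proj_sup M S = (THE p. p \<in> projections M \<and> (\<forall>q\<in>S. op_le q p)
      \<and> (\<forall>r\<in>projections M. (\<forall>q\<in>S. op_le q r) \<longrightarrow> op_le p r))"

definition support_s :: "('a::chilbert \<Rightarrow> 'a) set \<Rightarrow> ('a \<Rightarrow> 'a) \<Rightarrow> ('a \<Rightarrow> 'a)" where
  "support_s M x = proj_sup M {q\<in>projections M. op_le q x}"

definition null_n :: "('a::chilbert \<Rightarrow> 'a) set \<Rightarrow> ('a \<Rightarrow> 'a) \<Rightarrow> ('a \<Rightarrow> 'a)" where
  "null_n M x = proj_sup M {q\<in>projections M. q \<circ> x = zero_op}"

definition strict_in :: "('a::chilbert \<Rightarrow> 'a) set \<Rightarrow> ('a \<Rightarrow> 'a) \<Rightarrow> bool" where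
  "strict_in M x \<longleftrightarrow> support_s M x = zero_op \<and> null_n M x = zero_op"

definition op_sqrt :: "('a::chilbert \<Rightarrow> 'a) \<Rightarrow> ('a \<Rightarrow> 'a)" where
  "op_sqrt a = (THE b. positive_op b \<and> b \<circ> b = a)"

end

theory Submission
  imports Defs "HOL-Computational_Algebra.Polynomial"
begin

lemma scaleC_zero_left[simp]: "(0::complex) *\<^sub>C (x::'a::chilbert) = 0"
proof -
  have "(0 + 0) *\<^sub>C x = 0 *\<^sub>C x + 0 *\<^sub>C x" by (rule scaleC_add_left)
  then show ?thesis by simp
qed

lemma scaleC_zero_right[simp]: "c *\<^sub>C (0::'a::chilbert) = 0"
proof -
  have "c *\<^sub>C (0 + 0) = c *\<^sub>C (0::'a) + c *\<^sub>C 0" by (rule scaleC_add_right)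
  then show ?thesis by simp
qed

lemma scaleC_minus_right: "c *\<^sub>C (- x) = - (c *\<^sub>C (x::'a::chilbert))"
proof -
  have "c *\<^sub>C (x + - x) = c *\<^sub>C x + c *\<^sub>C (- x)" by (rule scaleC_add_right)
  then have "c *\<^sub>C x + c *\<^sub>C (- x) = 0" by (simp only: add.right_inverse scaleC_zero_right)
  then show ?thesis by (rule minus_unique[THEN sym])
qed

lemma scaleC_diff_right: "c *\<^sub>C (x - y) = c *\<^sub>C x - c *\<^sub>C (y::'a::chilbert)"
  unfolding diff_conv_add_uminus by (simp only: scaleC_add_right scaleC_minus_right)

lemma scaleC_minus_left: "(- c) *\<^sub>C x = - (c *\<^sub>C (x::'a::chilbert))"
proof -
  have "(c + - c) *\<^sub>C x = c *\<^sub>C x + (- c) *\<^sub>C x" by (rule scaleC_add_left)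
  then have "c *\<^sub>C x + (- c) *\<^sub>C x = 0" by (simp only: add.right_inverse scaleC_zero_left)
  then show ?thesis by (rule minus_unique[THEN sym])
qed

lemma scaleC_diff_left: "(c - d) *\<^sub>C x = c *\<^sub>C x - d *\<^sub>C (x::'a::chilbert)"
  unfolding diff_conv_add_uminus by (simp only: scaleC_add_left scaleC_minus_left)

lemma cinner_add_left: "cinner (x + y) (z::'a::chilbert) = cinner x z + cinner y z"
  by (metis cinner_commute cinner_add_right complex_cnj_add)

lemma cinner_scaleC_left: "cinner (c *\<^sub>C x) (y::'a::chilbert) = cnj c * cinner x y"
  by (metis cinner_commute cinner_scaleC_right complex_cnj_mult)

lemma cinner_zero_right[simp]: "cinner x (0::'a::chilbert) = 0"
  using cinner_scaleC_right[of x 0 0] by simp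

lemma cinner_zero_left[simp]: "cinner (0::'a::chilbert) x = 0"
  using cinner_scaleC_left[of 0 0 x] by simp

lemma cinner_minus_right: "cinner x (- y) = - cinner x (y::'a::chilbert)"
  using cinner_add_right[of x y "-y"] by (simp only: add.right_inverse cinner_zero_right) (rule minus_unique[THEN sym], rule sym)

lemma cinner_minus_left: "cinner (- x) y = - cinner x (y::'a::chilbert)"
  using cinner_add_left[of x "-x" y] by (simp only: add.right_inverse cinner_zero_left) (rule minus_unique[THEN sym], rule sym)

lemma cinner_diff_right: "cinner x (y - z) = cinner x y - cinner x (z::'a::chilbert)"
  unfolding diff_conv_add_uminus by (simp only: cinner_add_right cinner_minus_right)

lemma cinner_diff_left: "cinner (x - y) z = cinner x z - cinner y (z::'a::chilbert)"
  unfolding diff_conv_add_uminus by (simp only: cinner_add_left cinner_minus_left)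

lemmas cinner_simps = cinner_add_left cinner_add_right cinner_diff_left cinner_diff_right
  cinner_scaleC_left cinner_scaleC_right cinner_minus_left cinner_minus_right

lemma cinner_sum_right: "cinner x (sum f A) = (\<Sum>i\<in>A. cinner x (f i :: 'a::chilbert))"
  by (induction A rule: infinite_finite_induct) (auto simp: cinner_add_right)

lemma cinner_self_real: "cinner x (x::'a::chilbert) = complex_of_real (Re (cinner x x))"
  using cinner_nonneg[of x] by (simp add: complex_eq_iff)

lemma cinner_self_Im[simp]: "Im (cinner x (x::'a::chilbert)) = 0"
  using cinner_nonneg by blast

lemma cinner_self_Re_ge0[simp]: "Re (cinner x (x::'a::chilbert)) \<ge> 0"
  using cinner_nonneg by blast

lemma cnorm_ge0[simp]: "cnorm x \<ge> 0"
  by (simp add: cnorm_def)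

lemma cnorm_sq: "(cnorm x)^2 = Re (cinner x (x::'a::chilbert))"
  by (simp add: cnorm_def)

lemma cnorm_eq_0[simp]: "cnorm x = 0 \<longleftrightarrow> x = (0::'a::chilbert)"
proof
  assume "cnorm x = 0"
  then have "Re (cinner x x) = 0" by (simp add: cnorm_def)
  then have "cinner x x = 0" using cinner_self_real[of x] by simp
  then show "x = 0" using cinner_eq_zero by blast
qed (simp add: cnorm_def)

lemma cnorm_zero[simp]: "cnorm (0::'a::chilbert) = 0" by simp

lemma cnorm_gt0: "x \<noteq> 0 \<Longrightarrow> cnorm (x::'a::chilbert) > 0"
  using cnorm_eq_0 cnorm_ge0 by (metis less_eq_real_def)

lemma cinner_self_cnorm: "cinner x x = complex_of_real ((cnorm (x::'a::chilbert))^2)"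
  by (simp add: cnorm_sq flip: cinner_self_real)

lemma quad_lemma:
  fixes A U C :: real
  assumes "\<And>t. 0 \<le> A - 2*t*U + t*t*U*C" and "U \<ge> 0" and "C \<ge> 0"
  shows "U \<le> A * C"
proof (cases "C = 0")
  case True
  show ?thesis
  proof (rule ccontr)
    assume "\<not> U \<le> A * C"
    then have "U > 0" using True by simp
    have "0 \<le> A - 2*((A+1)/(2*U))*U + ((A+1)/(2*U))*((A+1)/(2*U))*U*C"
      using assms(1) .
    then have "0 \<le> A - (A + 1)" using \<open>U>0\<close> True by (simp add: field_simps)
    then show False by simp
  qed
next
  case False
  then have "C > 0" using assms(3) by simp
  have "0 \<le> A - 2*(1/C)*U + (1/C)*(1/C)*U*C" using assms(1) .
  then have "0 \<le> A - U/C" using \<open>C>0\<close> by (simp add: field_simps)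
  then have "U/C \<le> A" by simp
  then show ?thesis using \<open>C>0\<close> by (simp add: field_simps)
qed

definition lin_op :: "('a::chilbert \<Rightarrow> 'a) \<Rightarrow> bool" where
  "lin_op T \<longleftrightarrow> (\<forall>x y. T (x + y) = T x + T y) \<and> (\<forall>c x. T (c *\<^sub>C x) = c *\<^sub>C T x)"

definition herm :: "('a::chilbert \<Rightarrow> 'a) \<Rightarrow> bool" where
  "herm T \<longleftrightarrow> (\<forall>x y. cinner (T x) y = cinner x (T y))"

lemma lin_op_neg:
  assumes "lin_op T" shows "T (- x) = - T x"
proof -
  have "- x = (-1) *\<^sub>C x" using scaleC_minus_left[of 1 x] scaleC_one[of x] by simp
  moreover have "- T x = (-1) *\<^sub>C T x" using scaleC_minus_left[of 1 "T x"] scaleC_one[of "T x"] by simp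
  moreover have "T ((-1) *\<^sub>C x) = (-1) *\<^sub>C T x" using assms by (simp add: lin_op_def)
  ultimately show ?thesis by simp
qed

lemma lin_opD:
  assumes "lin_op T"
  shows "T (x + y) = T x + T y" "T (c *\<^sub>C x) = c *\<^sub>C T x" "T 0 = 0"
    "T (- x) = - T x" "T (x - y) = T x - T y"
proof -
  show 1: "T (x + y) = T x + T y" "T (c *\<^sub>C x) = c *\<^sub>C T x" using assms by (auto simp: lin_op_def)
  show 2: "T 0 = 0" using assms unfolding lin_op_def by (metis scaleC_zero_left)
  show 3: "T (- x) = - T x" using assms by (rule lin_op_neg)
  have "T (x + - y) = T x + T (- y)" using assms unfolding lin_op_def by blast
  then show "T (x - y) = T x - T y" unfolding diff_conv_add_uminus lin_op_neg[OF assms] .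
qed

lemma bounded_lin: "bounded_op T \<Longrightarrow> lin_op T"
  by (simp add: bounded_op_def lin_op_def)

lemma hermD: "herm T \<Longrightarrow> cinner (T x) y = cinner x (T y)"
  by (simp add: herm_def)

lemma cs_form:
  assumes "lin_op T" and "herm T" and "\<And>z. Re (cinner z (T z)) \<ge> 0"
  shows "(cmod (cinner x (T y)))^2 \<le> Re (cinner x (T x)) * Re (cinner y (T y))"
proof -
  define u where "u = cinner x (T y)"
  define A where "A = Re (cinner x (T x))"
  define C where "C = Re (cinner y (T y))"
  have yx: "cinner y (T x) = cnj u"
    using hermD[OF assms(2), of y x] unfolding u_def by (metis cinner_commute)
  have "0 \<le> A - 2*t*(cmod u)^2 + t*t*(cmod u)^2*C" for t :: real
  proof -
    define s where "s = - (complex_of_real t * cnj u)"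
    have "Re (cinner (x + s *\<^sub>C y) (T (x + s *\<^sub>C y))) \<ge> 0" by (rule assms(3))
    also have "cinner (x + s *\<^sub>C y) (T (x + s *\<^sub>C y)) =
      cinner x (T x) + s * cinner x (T y) + cnj s * cinner y (T x) + cnj s * s * cinner y (T y)"
      by (simp add: lin_opD[OF assms(1)] cinner_simps algebra_simps)
    finally have 0: "0 \<le> Re (cinner x (T x) + s * u + cnj s * cnj u + cnj s * s * cinner y (T y))"
      by (simp add: u_def yx)
    have su: "s * u = - complex_of_real (t * (cmod u)^2)"
      unfolding s_def of_real_mult complex_norm_square by (simp add: mult.commute mult.left_commute)
    have ss: "cnj s * s = complex_of_real (t * t * (cmod u)^2)"
      unfolding s_def of_real_mult complex_norm_square by (simp add: mult.commute mult.left_commute)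
    have csu: "cnj s * cnj u = - complex_of_real (t * (cmod u)^2)"
      using arg_cong[OF su, of cnj] by simp
    have "Re (cinner x (T x) + s * u + cnj s * cnj u + cnj s * s * cinner y (T y))
        = A - 2*t*(cmod u)^2 + t*t*(cmod u)^2*C"
      unfolding su csu ss A_def C_def by simp
    then show ?thesis using 0 by simp
  qed
  moreover have "A \<ge> 0" "C \<ge> 0" using assms(3) by (auto simp: A_def C_def)
  ultimately have "(cmod u)^2 \<le> A * C"
    using quad_lemma[of A "(cmod u)^2" C] by (simp add: mult.assoc)
  then show ?thesis by (simp add: u_def A_def C_def)
qed

lemma lin_id: "lin_op (id::'a::chilbert\<Rightarrow>'a)" by (simp add: lin_op_def)
lemma herm_id: "herm (id::'a::chilbert\<Rightarrow>'a)" by (simp add: herm_def)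

lemma cs_sq: "(cmod (cinner x y))^2 \<le> (cnorm x)^2 * (cnorm (y::'a::chilbert))^2"
  using cs_form[OF lin_id herm_id, of x y] by (simp add: cnorm_sq)

lemma cs: "cmod (cinner x y) \<le> cnorm x * cnorm (y::'a::chilbert)"
proof (rule power2_le_imp_le)
  show "(cmod (cinner x y))\<^sup>2 \<le> (cnorm x * cnorm y)\<^sup>2"
    using cs_sq[of x y] by (simp only: power_mult_distrib)
qed simp

lemma cs_Re: "Re (cinner x y) \<le> cnorm x * cnorm (y::'a::chilbert)"
  using cs[of x y] complex_Re_le_cmod order_trans by blast

lemma cnorm_add_sq: "(cnorm (x + y))^2 = (cnorm x)^2 + 2 * Re (cinner x y) + (cnorm (y::'a::chilbert))^2"
proof -
  have "Re (cinner y x) = Re (cinner x y)" using cinner_commute[of y x] by simp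
  then show ?thesis by (simp add: cnorm_sq cinner_simps)
qed

lemma cnorm_diff_sq: "(cnorm (x - y))^2 = (cnorm x)^2 - 2 * Re (cinner x y) + (cnorm (y::'a::chilbert))^2"
proof -
  have "Re (cinner y x) = Re (cinner x y)" using cinner_commute[of y x] by simp
  then show ?thesis by (simp add: cnorm_sq cinner_simps)
qed

lemma cnorm_triangle: "cnorm (x + y) \<le> cnorm x + cnorm (y::'a::chilbert)"
proof -
  have "(cnorm (x + y))^2 \<le> (cnorm x + cnorm y)^2"
  proof -
    have "(cnorm x + cnorm y)^2 = (cnorm x)^2 + 2 * (cnorm x * cnorm y) + (cnorm y)^2"
      by (simp add: power2_eq_square algebra_simps)
    then show ?thesis using cnorm_add_sq[of x y] cs_Re[of x y] by linarith
  qed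
  then show ?thesis by (rule power2_le_imp_le) (simp add: add_nonneg_nonneg)
qed

lemma cnorm_minus: "cnorm (- x) = cnorm (x::'a::chilbert)"
  by (simp add: cnorm_def cinner_minus_left cinner_minus_right)

lemma cnorm_minus_commute: "cnorm (x - y) = cnorm (y - (x::'a::chilbert))"
  by (metis cnorm_minus minus_diff_eq)

lemma cnorm_triangle_diff: "cnorm (x - z) \<le> cnorm (x - y) + cnorm (y - (z::'a::chilbert))"
  using cnorm_triangle[of "x - y" "y - z"] by simp

lemma cnorm_scaleC: "cnorm (c *\<^sub>C x) = cmod c * cnorm (x::'a::chilbert)"
proof -
  have "cinner (c *\<^sub>C x) (c *\<^sub>C x) = (cnj c * c) * cinner x x"
    by (simp only: cinner_scaleC_left cinner_scaleC_right mult.assoc mult.left_commute)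
  also have "cnj c * c = complex_of_real ((cmod c)^2)" by (metis complex_norm_square mult.commute)
  also have "cinner x x = complex_of_real ((cnorm x)^2)" by (rule cinner_self_cnorm)
  finally have "cinner (c *\<^sub>C x) (c *\<^sub>C x) = complex_of_real ((cmod c * cnorm x)^2)"
    by (simp only: of_real_mult power_mult_distrib)
  then have "(cnorm (c *\<^sub>C x))^2 = (cmod c * cnorm x)^2"
    unfolding cnorm_sq by simp
  then show ?thesis by (rule power2_eq_imp_eq) simp_all
qed

lemma cinner_eq_cnorm_sq: "Re (cinner x x) = (cnorm (x::'a::chilbert))^2"
  by (simp add: cnorm_sq)


lemma Lim_null_comparison:
  fixes f :: "'b \<Rightarrow> 'c::real_normed_vector"
  assumes "eventually (\<lambda>n. norm (f n) \<le> g n) F" and "(g \<longlongrightarrow> 0) F"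
  shows "(f \<longlongrightarrow> 0) F"
proof (rule tendsto_0_le[OF assms(2), of _ 1])
  show "\<forall>\<^sub>F x in F. norm (f x) \<le> norm (g x) * 1"
    using assms(1) by eventually_elim auto
qed

definition conv :: "(nat \<Rightarrow> 'a::chilbert) \<Rightarrow> 'a \<Rightarrow> bool" where
  "conv X L \<longleftrightarrow> (\<lambda>n. cnorm (X n - L)) \<longlonglongrightarrow> 0"

lemma conv_squeeze:
  assumes "\<And>n. cnorm (X n - L) \<le> f n" and "f \<longlonglongrightarrow> 0"
  shows "conv X L"
  unfolding conv_def
  by (rule Lim_null_comparison[OF _ assms(2)]) (simp add: assms(1))

lemma conv_const_zero:
  assumes "\<And>n. c \<le> f n" and "f \<longlonglongrightarrow> 0" shows "c \<le> (0::real)"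
  using LIMSEQ_le_const[OF assms(2)] assms(1) by blast

lemma conv_unique:
  assumes "conv X L" and "conv X L'" shows "L = L'"
proof -
  have "cnorm (L - L') \<le> cnorm (X n - L) + cnorm (X n - L')" for n
    using cnorm_triangle_diff[of L L' "X n"] cnorm_minus_commute[of L "X n"] by linarith
  moreover have "(\<lambda>n. cnorm (X n - L) + cnorm (X n - L')) \<longlonglongrightarrow> 0"
    using tendsto_add[OF assms[unfolded conv_def]] by simp
  ultimately have "cnorm (L - L') \<le> 0" by (rule conv_const_zero)
  then show ?thesis using cnorm_ge0[of "L - L'"] by simp
qed

lemma conv_add:
  assumes "conv X L" and "conv Y M" shows "conv (\<lambda>n. X n + Y n) (L + M)"
proof (rule conv_squeeze)
  show "cnorm (X n + Y n - (L + M)) \<le> cnorm (X n - L) + cnorm (Y n - M)" for n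
    using cnorm_triangle[of "X n - L" "Y n - M"] by (simp add: algebra_simps)
  show "(\<lambda>n. cnorm (X n - L) + cnorm (Y n - M)) \<longlonglongrightarrow> 0"
    using tendsto_add[OF assms[unfolded conv_def]] by simp
qed

lemma conv_diff:
  assumes "conv X L" and "conv Y M" shows "conv (\<lambda>n. X n - Y n) (L - M)"
proof (rule conv_squeeze)
  show "cnorm (X n - Y n - (L - M)) \<le> cnorm (X n - L) + cnorm (Y n - M)" for n
    using cnorm_triangle[of "X n - L" "M - Y n"] cnorm_minus_commute[of "Y n" M]
    by (simp add: algebra_simps)
  show "(\<lambda>n. cnorm (X n - L) + cnorm (Y n - M)) \<longlonglongrightarrow> 0"
    using tendsto_add[OF assms[unfolded conv_def]] by simp
qed

lemma conv_const: "conv (\<lambda>n. x) x"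
  by (simp add: conv_def)

lemma conv_shift: "conv (\<lambda>n. X (Suc n)) L \<longleftrightarrow> conv X L"
  unfolding conv_def
proof
  assume "(\<lambda>n. cnorm (X (Suc n) - L)) \<longlonglongrightarrow> 0"
  then show "(\<lambda>n. cnorm (X n - L)) \<longlonglongrightarrow> 0" by (rule LIMSEQ_imp_Suc)
next
  assume "(\<lambda>n. cnorm (X n - L)) \<longlonglongrightarrow> 0"
  then show "(\<lambda>n. cnorm (X (Suc n) - L)) \<longlonglongrightarrow> 0" by (rule LIMSEQ_Suc)
qed

lemma conv_bounded_op:
  assumes "lin_op T" and "\<And>x. cnorm (T x) \<le> K * cnorm x" and "conv X L"
  shows "conv (\<lambda>n. T (X n)) (T L)"
proof (rule conv_squeeze)
  show "cnorm (T (X n) - T L) \<le> K * cnorm (X n - L)" for n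
    using assms(2)[of "X n - L"] lin_opD(5)[OF assms(1)] by simp
  show "(\<lambda>n. K * cnorm (X n - L)) \<longlonglongrightarrow> 0"
    using tendsto_mult_right_zero[OF assms(3)[unfolded conv_def]] by simp
qed

lemma conv_scaleC:
  assumes "conv X L" shows "conv (\<lambda>n. c *\<^sub>C X n) (c *\<^sub>C L)"
proof (rule conv_squeeze)
  show "cnorm (c *\<^sub>C X n - c *\<^sub>C L) \<le> cmod c * cnorm (X n - L)" for n
    by (simp add: cnorm_scaleC flip: scaleC_diff_right)
  show "(\<lambda>n. cmod c * cnorm (X n - L)) \<longlonglongrightarrow> 0"
    using tendsto_mult_right_zero[OF assms[unfolded conv_def]] by simp
qed

lemma conv_cinner:
  assumes "conv X L" shows "(\<lambda>n. cinner z (X n)) \<longlonglongrightarrow> cinner z L"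
proof -
  have "(\<lambda>n. cinner z (X n) - cinner z L) \<longlonglongrightarrow> 0"
  proof (rule Lim_null_comparison)
    show "\<forall>\<^sub>F n in sequentially. norm (cinner z (X n) - cinner z L) \<le> cnorm z * cnorm (X n - L)"
      using cs[of z] by (simp add: cinner_diff_right[symmetric])
    show "(\<lambda>n. cnorm z * cnorm (X n - L)) \<longlonglongrightarrow> 0"
      using tendsto_mult_right_zero[OF assms[unfolded conv_def]] by simp
  qed
  then show ?thesis by (simp add: LIM_zero_iff)
qed

lemma cnorm_diff_ge: "\<bar>cnorm x - cnorm y\<bar> \<le> cnorm (x - (y::'a::chilbert))"
  using cnorm_triangle_diff[of x 0 y] cnorm_triangle_diff[of y 0 x] cnorm_minus_commute[of x y]
  by (simp add: cnorm_minus)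

lemma conv_cnorm:
  assumes "conv X L" shows "(\<lambda>n. cnorm (X n)) \<longlonglongrightarrow> cnorm L"
proof -
  have "(\<lambda>n. cnorm (X n) - cnorm L) \<longlonglongrightarrow> 0"
  proof (rule Lim_null_comparison)
    show "\<forall>\<^sub>F n in sequentially. norm (cnorm (X n) - cnorm L) \<le> cnorm (X n - L)"
      by (intro always_eventually allI) (simp add: cnorm_diff_ge)
    show "(\<lambda>n. cnorm (X n - L)) \<longlonglongrightarrow> 0" using assms by (simp add: conv_def)
  qed
  then show ?thesis by (simp add: LIM_zero_iff)
qed

lemma cauchy_conv:
  assumes "\<And>e. e > 0 \<Longrightarrow> \<exists>N. \<forall>m\<ge>N. \<forall>n\<ge>N. cnorm (X m - X n) < e"
  shows "\<exists>L. conv X (L::'a::chilbert)"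
proof -
  obtain L where L: "\<forall>e>0. \<exists>N. \<forall>n\<ge>N. cnorm (X n - L) < e"
    using complete[of X] assms unfolding cnorm_def by blast
  have "(\<lambda>n. cnorm (X n - L)) \<longlonglongrightarrow> 0"
    unfolding LIMSEQ_iff using L by simp
  then show ?thesis unfolding conv_def by blast
qed

section \<open>Closed subspaces and orthogonal projection\<close>

definition csub :: "'a::chilbert set \<Rightarrow> bool" where
  "csub K \<longleftrightarrow> 0 \<in> K \<and> (\<forall>x\<in>K. \<forall>y\<in>K. x + y \<in> K) \<and> (\<forall>c. \<forall>x\<in>K. c *\<^sub>C x \<in> K)
     \<and> (\<forall>X L. (\<forall>n. X n \<in> K) \<longrightarrow> conv X L \<longrightarrow> L \<in> K)"

lemma csubD:
  assumes "csub K"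
  shows "0 \<in> K" "x \<in> K \<Longrightarrow> y \<in> K \<Longrightarrow> x + y \<in> K" "x \<in> K \<Longrightarrow> c *\<^sub>C x \<in> K"
    "(\<And>n. X n \<in> K) \<Longrightarrow> conv X L \<Longrightarrow> L \<in> K"
  using assms unfolding csub_def by blast+

lemma csub_neg: "csub K \<Longrightarrow> x \<in> K \<Longrightarrow> - x \<in> K"
  using csubD(3)[of K x "-1"] scaleC_minus_left[of 1 x] by (simp add: scaleC_one)

lemma csub_diff: "csub K \<Longrightarrow> x \<in> K \<Longrightarrow> y \<in> K \<Longrightarrow> x - y \<in> K"
  using csubD(2)[of K x "-y"] csub_neg[of K y] by simp

lemma scaleC_two: "(2::complex) *\<^sub>C v = v + (v::'a::chilbert)"
  using scaleC_add_left[of 1 1 v] by (simp add: scaleC_one)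

lemma parallelogram:
  "(cnorm (a - b))^2 + (cnorm (a + b))^2 = 2 * (cnorm a)^2 + 2 * (cnorm (b::'a::chilbert))^2"
  using cnorm_add_sq[of a b] cnorm_diff_sq[of a b] by simp

lemma proj_exists:
  assumes K: "csub K"
  shows "\<exists>p\<in>K. \<forall>k\<in>K. cinner k (x - p) = 0"
proof -
  define D where "D = (\<lambda>k. (cnorm (x - k))^2) ` K"
  define d where "d = Inf D"
  have Dne: "D \<noteq> {}" using csubD(1)[OF K] by (auto simp: D_def)
  have Dbdd: "bdd_below D" unfolding D_def by (rule bdd_belowI[of _ 0]) auto
  have dle: "d \<le> (cnorm (x - k))^2" if "k \<in> K" for k
    unfolding d_def using Dbdd that by (auto simp: D_def intro: cInf_lower)
  have "\<exists>k\<in>K. (cnorm (x - k))^2 < d + 1 / (real n + 1)" for n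
  proof -
    have "Inf D < d + 1 / (real n + 1)" unfolding d_def by simp
    from cInf_lessD[OF Dne this] show ?thesis by (auto simp: D_def)
  qed
  then obtain k where kK: "\<And>n. k n \<in> K" and kd: "\<And>n. (cnorm (x - k n))^2 < d + 1 / (real n + 1)"
    by metis
  have kdiff: "(cnorm (k m - k n))^2 \<le> 2 / (real m + 1) + 2 / (real n + 1)" for m n
  proof -
    define mid where "mid = (1/2) *\<^sub>C (k m + k n)"
    have midK: "mid \<in> K" unfolding mid_def using csubD(2,3)[OF K] kK by blast
    have "x - k n + (x - k m) = (2::complex) *\<^sub>C (x - mid)"
    proof -
      have "(2::complex) *\<^sub>C mid = k m + k n"
        unfolding mid_def scaleC_scaleC by (simp add: scaleC_one)
      then show ?thesis unfolding scaleC_diff_right scaleC_two by (simp add: algebra_simps)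
    qed
    then have "(cnorm (x - k n + (x - k m)))^2 = 4 * (cnorm (x - mid))^2"
      by (simp add: cnorm_scaleC power_mult_distrib)
    moreover have "(cnorm (k m - k n))^2 + (cnorm (x - k n + (x - k m)))^2
        = 2 * (cnorm (x - k n))^2 + 2 * (cnorm (x - k m))^2"
      using parallelogram[of "x - k n" "x - k m"] by simp
    moreover have "2 / (real n + 1) = 2 * (1 / (real n + 1))" "2 / (real m + 1) = 2 * (1 / (real m + 1))"
      by simp_all
    moreover have "d \<le> (cnorm (x - mid))^2" using dle[OF midK] .
    moreover note kd[of n] kd[of m]
    ultimately show ?thesis by linarith
  qed
  have "\<exists>N. \<forall>m\<ge>N. \<forall>n\<ge>N. cnorm (k m - k n) < e" if "e > 0" for e
  proof -
    obtain N :: nat where N: "4 / e^2 < real N" using reals_Archimedean2 by blast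
    have "cnorm (k m - k n) < e" if "m \<ge> N" "n \<ge> N" for m n
    proof -
      have e2: "e^2 > 0" using \<open>e>0\<close> by simp
      have "2 / (real m + 1) \<le> 2 / (real N + 1)" "2 / (real n + 1) \<le> 2 / (real N + 1)"
        using that by (auto intro!: divide_left_mono)
      moreover have "4 / (real N + 1) < e^2"
      proof -
        have "4 < e^2 * real N" using N e2 by (simp add: field_simps)
        moreover have "e^2 * (real N + 1) = e^2 * real N + e^2" by (simp add: distrib_left)
        ultimately have "4 < e^2 * (real N + 1)" using e2 by linarith
        then show ?thesis by (simp add: field_simps)
      qed
      ultimately have "(cnorm (k m - k n))^2 < e^2" using kdiff[of m n] by simp
      then show ?thesis using \<open>e>0\<close> by (simp add: power_less_imp_less_base less_le)
    qed
    then show ?thesis by blast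
  qed
  then obtain p where p: "conv k p" using cauchy_conv[of k] by blast
  have pK: "p \<in> K" using csubD(4)[OF K kK p] .
  have "(\<lambda>n. (cnorm (x - k n))^2) \<longlonglongrightarrow> (cnorm (x - p))^2"
  proof -
    have "conv (\<lambda>n. x - k n) (x - p)" using conv_diff[OF conv_const p] .
    from tendsto_power[OF conv_cnorm[OF this], of 2] show ?thesis .
  qed
  moreover have "(\<lambda>n. d + 1 / (real n + 1)) \<longlonglongrightarrow> d"
    using LIMSEQ_inverse_real_of_nat_add[of d]
    by (simp add: inverse_eq_divide add.commute)
  ultimately have pmin: "(cnorm (x - p))^2 \<le> d"
    using kd by (intro LIMSEQ_le) (auto intro: less_imp_le)
  have "cinner kk (x - p) = 0" if kkK: "kk \<in> K" for kk
  proof -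
    define w where "w = x - p"
    define u where "u = cinner kk w"
    have "0 \<le> 0 - 2*t*(cmod u)^2 + t*t*(cmod u)^2*(cnorm kk)^2" for t :: real
    proof -
      define s where "s = complex_of_real t * u"
      have "p + s *\<^sub>C kk \<in> K" using csubD(2,3)[OF K] pK kkK by blast
      then have "(cnorm w)^2 \<le> (cnorm (x - (p + s *\<^sub>C kk)))^2"
        using pmin dle[of "p + s *\<^sub>C kk"] unfolding w_def by linarith
      also have "x - (p + s *\<^sub>C kk) = w - s *\<^sub>C kk" by (simp add: w_def)
      also have "(cnorm (w - s *\<^sub>C kk))^2 = (cnorm w)^2 - 2 * Re (cinner w (s *\<^sub>C kk)) + (cnorm (s *\<^sub>C kk))^2"
        by (rule cnorm_diff_sq)
      also have "cinner w (s *\<^sub>C kk) = complex_of_real (t * (cmod u)^2)"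
      proof -
        have "cinner w kk = cnj u" unfolding u_def by (metis cinner_commute)
        then have "cinner w (s *\<^sub>C kk) = complex_of_real t * (u * cnj u)"
          by (simp add: cinner_scaleC_right s_def mult.assoc)
        also have "u * cnj u = complex_of_real ((cmod u)^2)" by (metis complex_norm_square)
        finally show ?thesis by simp
      qed
      also have "cnorm (s *\<^sub>C kk) = \<bar>t\<bar> * cmod u * cnorm kk"
        by (simp add: cnorm_scaleC s_def norm_mult)
      finally have "(cnorm w)^2 \<le> (cnorm w)^2 - 2 * (t * (cmod u)^2) + (\<bar>t\<bar> * cmod u * cnorm kk)^2"
        by simp
      then have "(cnorm w)^2 \<le> (cnorm w)^2 - 2 * (t * (cmod u)^2) + t^2 * (cmod u)^2 * (cnorm kk)^2"
        by (simp only: power_mult_distrib power2_abs)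
      then show ?thesis by (simp add: power2_eq_square algebra_simps)
    qed
    from quad_lemma[OF this] have "(cmod u)^2 \<le> 0" by simp
    then have "u = 0" by simp
    then show ?thesis by (simp add: u_def w_def)
  qed
  then show ?thesis using pK by blast
qed

definition proj :: "'a::chilbert set \<Rightarrow> 'a \<Rightarrow> 'a" where
  "proj K x = (SOME p. p \<in> K \<and> (\<forall>k\<in>K. cinner k (x - p) = 0))"

lemma proj_prop:
  assumes "csub K"
  shows "proj K x \<in> K" "k \<in> K \<Longrightarrow> cinner k (x - proj K x) = 0"
proof -
  have "\<exists>p. p \<in> K \<and> (\<forall>k\<in>K. cinner k (x - p) = 0)" using proj_exists[OF assms] by blast
  from someI_ex[OF this] show "proj K x \<in> K" "k \<in> K \<Longrightarrow> cinner k (x - proj K x) = 0"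
    unfolding proj_def by blast+
qed

lemma cinner_self_eq_zero: "cinner x x = 0 \<longleftrightarrow> x = (0::'a::chilbert)"
  by (rule cinner_eq_zero)

lemma proj_unique:
  assumes K: "csub K" and "p \<in> K" and "\<And>k. k \<in> K \<Longrightarrow> cinner k (x - p) = 0"
  shows "proj K x = p"
proof -
  define q where "q = proj K x"
  have qK: "q \<in> K" and qo: "\<And>k. k \<in> K \<Longrightarrow> cinner k (x - q) = 0"
    using proj_prop[OF K] unfolding q_def by auto
  have dK: "q - p \<in> K" using csub_diff[OF K qK assms(2)] .
  have "cinner (q - p) ((x - p) - (x - q)) = 0"
    using assms(3)[OF dK] qo[OF dK] by (simp add: cinner_diff_right)
  moreover have "(x - p) - (x - q) = q - p" by simp
  ultimately have "cinner (q - p) (q - p) = 0" by simp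
  then show ?thesis unfolding q_def[symmetric] by (simp add: cinner_self_eq_zero)
qed

lemma proj_on_K: "csub K \<Longrightarrow> k \<in> K \<Longrightarrow> proj K k = k"
  by (rule proj_unique) auto

lemma proj_orth_zero: "csub K \<Longrightarrow> (\<And>k. k \<in> K \<Longrightarrow> cinner k w = 0) \<Longrightarrow> proj K w = 0"
  by (rule proj_unique) (auto simp: csubD)

lemma proj_lin:
  assumes K: "csub K" shows "lin_op (proj K)"
  unfolding lin_op_def
proof (intro conjI allI)
  fix x y
  show "proj K (x + y) = proj K x + proj K y"
  proof (rule proj_unique[OF K])
    show "proj K x + proj K y \<in> K" using K proj_prop(1)[OF K] by (simp add: csubD)
    fix k assume "k \<in> K"
    then have "cinner k (x - proj K x) + cinner k (y - proj K y) = 0"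
      using proj_prop(2)[OF K] by simp
    moreover have "x + y - (proj K x + proj K y) = (x - proj K x) + (y - proj K y)" by simp
    ultimately show "cinner k (x + y - (proj K x + proj K y)) = 0"
      by (simp only: cinner_add_right)
  qed
next
  fix c x
  show "proj K (c *\<^sub>C x) = c *\<^sub>C proj K x"
  proof (rule proj_unique[OF K])
    show "c *\<^sub>C proj K x \<in> K" using K proj_prop(1)[OF K] by (simp add: csubD)
    fix k assume "k \<in> K"
    then have "c * cinner k (x - proj K x) = 0"
      using proj_prop(2)[OF K] by simp
    then show "cinner k (c *\<^sub>C x - c *\<^sub>C proj K x) = 0"
      by (simp only: cinner_scaleC_right flip: scaleC_diff_right)
  qed
qed

lemma proj_idem: "csub K \<Longrightarrow> proj K (proj K x) = proj K x"
  using proj_on_K proj_prop(1) by blast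

lemma proj_herm:
  assumes K: "csub K" shows "herm (proj K)"
  unfolding herm_def
proof (intro allI)
  fix x y
  have 1: "cinner (proj K x) (y - proj K y) = 0" using proj_prop[OF K] by blast
  have 2: "cinner (proj K y) (x - proj K x) = 0" using proj_prop[OF K] by blast
  then have 3: "cinner (x - proj K x) (proj K y) = 0" by (metis cinner_commute complex_cnj_zero)
  have "cinner (proj K x) y = cinner (proj K x) (proj K y)"
    using 1 by (simp add: cinner_diff_right)
  also have "\<dots> = cinner x (proj K y)"
    using 3 by (simp add: cinner_diff_left)
  finally show "cinner (proj K x) y = cinner x (proj K y)" .
qed

lemma proj_pyth:
  assumes K: "csub K"
  shows "(cnorm x)^2 = (cnorm (proj K x))^2 + (cnorm (x - proj K x))^2"
proof -
  have "cinner (proj K x) (x - proj K x) = 0" using proj_prop[OF K] by blast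
  then show ?thesis using cnorm_add_sq[of "proj K x" "x - proj K x"] by simp
qed

lemma proj_contr: "csub K \<Longrightarrow> cnorm (proj K x) \<le> cnorm x"
  using proj_pyth[of K x] by (metis cnorm_ge0 le_add_same_cancel1 power2_le_imp_le zero_le_power2)

lemma proj_bounded: "csub K \<Longrightarrow> bounded_op (proj K)"
  using proj_lin[of K] proj_contr[of K] unfolding bounded_op_def lin_op_def
  by (metis mult_1)

section \<open>Riesz representation and adjoints\<close>

lemma cinner_ext: "(\<And>y. cinner x y = cinner x' y) \<Longrightarrow> x = (x'::'a::chilbert)"
proof -
  assume h: "\<And>y. cinner x y = cinner x' y"
  have "cinner (x - x') (x - x') = 0"
    using h[of "x - x'"] by (simp add: cinner_diff_left)
  then show ?thesis by (simp add: cinner_self_eq_zero)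
qed

lemma riesz:
  fixes phi :: "'a::chilbert \<Rightarrow> complex"
  assumes add: "\<And>x y. phi (x + y) = phi x + phi y"
    and hom: "\<And>c x. phi (c *\<^sub>C x) = c * phi x"
    and bnd: "\<And>x. cmod (phi x) \<le> B * cnorm x"
  shows "\<exists>z. \<forall>y. phi y = cinner z y"
proof -
  have neg: "phi (- x) = - phi x" for x
    using hom[of "-1" x] scaleC_minus_left[of 1 x] by (simp add: scaleC_one)
  have diff: "phi (x - y) = phi x - phi y" for x y
    using add[of x "-y"] neg[of y] by simp
  have zero: "phi 0 = 0" using hom[of 0 0] by simp
  define K where "K = {x. phi x = 0}"
  have K: "csub K"
    unfolding csub_def
  proof (intro conjI allI ballI impI)
    show "0 \<in> K" by (simp add: K_def zero)
    show "x + y \<in> K" if "x \<in> K" "y \<in> K" for x y using that by (simp add: K_def add)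
    show "c *\<^sub>C x \<in> K" if "x \<in> K" for c x using that by (simp add: K_def hom)
    fix X L assume XK: "\<forall>n. X n \<in> K" and c: "conv X L"
    have "cmod (phi L) \<le> B * cnorm (X n - L)" for n
    proof -
      have "phi L = - phi (X n - L)" using XK diff[of "X n" L] by (simp add: K_def)
      then show ?thesis using bnd[of "X n - L"] by simp
    qed
    moreover have "(\<lambda>n. B * cnorm (X n - L)) \<longlonglongrightarrow> 0"
      using tendsto_mult_right_zero[OF c[unfolded conv_def]] by simp
    ultimately have "cmod (phi L) \<le> 0" by (rule conv_const_zero)
    then show "L \<in> K" by (simp add: K_def)
  qed
  show ?thesis
  proof (cases "\<forall>y. phi y = 0")
    case True
    then show ?thesis by (intro exI[of _ 0]) simp
  next
    case False
    then obtain u where u: "phi u \<noteq> 0" by blast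
    define w where "w = u - proj K u"
    have pK: "phi (proj K u) = 0" using proj_prop(1)[OF K] by (simp add: K_def)
    have pw: "phi w = phi u" using pK by (simp add: w_def diff)
    have worth: "cinner k w = 0" if "k \<in> K" for k
      using proj_prop(2)[OF K that] by (simp add: w_def)
    have wne: "w \<noteq> 0" using pw u by (auto simp: zero)
    have ww: "cinner w w \<noteq> 0" using wne by (simp add: cinner_self_eq_zero)
    have "phi y = (phi w / cinner w w) * cinner w y" for y
    proof -
      define v where "v = phi w *\<^sub>C y - phi y *\<^sub>C w"
      have "phi v = 0" by (simp add: v_def diff hom mult.commute)
      then have "v \<in> K" by (simp add: K_def)
      have "cinner w v = 0"
        using worth[OF \<open>v \<in> K\<close>] by (metis cinner_commute complex_cnj_zero)
      then have "phi w * cinner w y = phi y * cinner w w"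
        by (simp add: v_def cinner_diff_right cinner_scaleC_right)
      then show ?thesis using ww by (simp add: field_simps)
    qed
    moreover have "(phi w / cinner w w) * cinner w y = cinner ((cnj (phi w / cinner w w)) *\<^sub>C w) y" for y
      by (simp add: cinner_scaleC_left)
    ultimately show ?thesis by metis
  qed
qed

lemma adj_exists:
  assumes "bounded_op T"
  shows "\<exists>S. \<forall>x y. cinner (S x) y = cinner x (T y)"
proof -
  obtain K where K: "\<And>x. cnorm (T x) \<le> K * cnorm x" using assms by (auto simp: bounded_op_def)
  have lin: "lin_op T" using assms by (rule bounded_lin)
  have "\<exists>z. \<forall>y. cinner x (T y) = cinner z y" for x
  proof (rule riesz)
    show "cinner x (T (y + z)) = cinner x (T y) + cinner x (T z)" for y z
      by (simp add: lin_opD[OF lin] cinner_add_right)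
    show "cinner x (T (c *\<^sub>C y)) = c * cinner x (T y)" for c y
      by (simp add: lin_opD[OF lin] cinner_scaleC_right)
    show "cmod (cinner x (T y)) \<le> (cnorm x * K) * cnorm y" for y
    proof -
      have "cmod (cinner x (T y)) \<le> cnorm x * cnorm (T y)" by (rule cs)
      also have "\<dots> \<le> cnorm x * (K * cnorm y)" using K[of y] by (simp add: mult_left_mono)
      finally show ?thesis by (simp add: mult.assoc)
    qed
  qed
  then obtain S where "\<And>x y. cinner x (T y) = cinner (S x) y" by metis
  then show ?thesis by metis
qed

lemma adj_char:
  assumes "bounded_op T"
  shows "cinner (adj T x) y = cinner x (T y)"
proof -
  obtain S where S: "\<forall>x y. cinner (S x) y = cinner x (T y)" using adj_exists[OF assms] by blast
  have "\<exists>!S. \<forall>x y. cinner (S x) y = cinner x (T y)"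
  proof (rule ex1I[of _ S])
    show "\<forall>x y. cinner (S x) y = cinner x (T y)" by (rule S)
    fix S' assume S': "\<forall>x y. cinner (S' x) y = cinner x (T y)"
    show "S' = S"
    proof
      fix x show "S' x = S x" using S S' by (intro cinner_ext) simp
    qed
  qed
  from theI'[OF this] show ?thesis unfolding adj_def by blast
qed

lemma adj_herm: "bounded_op T \<Longrightarrow> herm T \<Longrightarrow> adj T = T"
  by (intro ext cinner_ext) (simp add: adj_char hermD)

lemma adj_eq_herm: "bounded_op T \<Longrightarrow> adj T = T \<Longrightarrow> herm T"
  unfolding herm_def by (metis adj_char)


lemma cinner_ext2: "(\<And>y. cinner y x = cinner y x') \<Longrightarrow> x = (x'::'a::chilbert)"
proof -
  assume h: "\<And>y. cinner y x = cinner y x'"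
  have "cinner (x - x') (x - x') = 0"
    using h[of "x - x'"] by (simp add: cinner_diff_right)
  then show ?thesis by (simp add: cinner_self_eq_zero)
qed

lemma cinner_zero_ext2: "(\<And>y. cinner y x = 0) \<Longrightarrow> x = (0::'a::chilbert)"
  using cinner_ext2[of x 0] by simp

lemma bounded_opI: "lin_op T \<Longrightarrow> (\<And>x. cnorm (T x) \<le> K * cnorm x) \<Longrightarrow> bounded_op T"
  unfolding bounded_op_def lin_op_def by blast

lemma bounded_bound: "bounded_op T \<Longrightarrow> \<exists>K\<ge>0. \<forall>x. cnorm (T x) \<le> K * cnorm x"
proof -
  assume "bounded_op T"
  then obtain K where K: "\<And>x. cnorm (T x) \<le> K * cnorm x" by (auto simp: bounded_op_def)
  have "cnorm (T x) \<le> max K 0 * cnorm x" for x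
    using K[of x] by (metis cnorm_ge0 max.cobounded1 mult_right_mono order_trans)
  then show ?thesis by (intro exI[of _ "max K 0"]) auto
qed

lemma lin_diff: "lin_op A \<Longrightarrow> lin_op B \<Longrightarrow> lin_op (\<lambda>x. A x - B x)"
  unfolding lin_op_def by (simp add: scaleC_diff_right algebra_simps)

lemma lin_comp: "lin_op A \<Longrightarrow> lin_op B \<Longrightarrow> lin_op (A \<circ> B)"
  unfolding lin_op_def by simp

lemma bounded_diff: "bounded_op A \<Longrightarrow> bounded_op B \<Longrightarrow> bounded_op (\<lambda>x. A x - B x)"
proof -
  assume A: "bounded_op A" and B: "bounded_op B"
  obtain K1 where K1: "\<And>x. cnorm (A x) \<le> K1 * cnorm x" using A by (auto simp: bounded_op_def)
  obtain K2 where K2: "\<And>x. cnorm (B x) \<le> K2 * cnorm x" using B by (auto simp: bounded_op_def)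
  show ?thesis
  proof (rule bounded_opI)
    show "lin_op (\<lambda>x. A x - B x)" using lin_diff bounded_lin A B by blast
    show "cnorm (A x - B x) \<le> (K1 + K2) * cnorm x" for x
      using cnorm_triangle[of "A x" "- B x"] K1[of x] K2[of x] by (simp add: cnorm_minus distrib_right)
  qed
qed

lemma bounded_comp: "bounded_op A \<Longrightarrow> bounded_op B \<Longrightarrow> bounded_op (A \<circ> B)"
proof -
  assume A: "bounded_op A" and B: "bounded_op B"
  obtain K1 where K1: "K1 \<ge> 0" "\<And>x. cnorm (A x) \<le> K1 * cnorm x" using bounded_bound[OF A] by blast
  obtain K2 where K2: "\<And>x. cnorm (B x) \<le> K2 * cnorm x" using B by (auto simp: bounded_op_def)
  show ?thesis
  proof (rule bounded_opI)
    show "lin_op (A \<circ> B)" using lin_comp bounded_lin A B by blast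
    show "cnorm ((A \<circ> B) x) \<le> (K1 * K2) * cnorm x" for x
      using K1(2)[of "B x"] mult_left_mono[OF K2[of x] K1(1)] by (simp add: mult.assoc)
  qed
qed

lemma bounded_zero: "bounded_op (zero_op :: 'a::chilbert \<Rightarrow> 'a)"
  by (rule bounded_opI[of _ 0]) (auto simp: zero_op_def lin_op_def)

lemma bounded_id: "bounded_op (id :: 'a::chilbert \<Rightarrow> 'a)"
  by (rule bounded_opI[of _ 1]) (auto simp: lin_op_def)

lemma polar_expand:
  assumes "lin_op T"
  shows "cinner (x + y) (T (x + y)) = cinner x (T x) + cinner y (T y) + cinner x (T y) + cinner y (T x)"
    "cinner (x + \<i> *\<^sub>C y) (T (x + \<i> *\<^sub>C y)) = cinner x (T x) + cinner y (T y)
        + \<i> * cinner x (T y) - \<i> * cinner y (T x)"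
proof -
  show "cinner (x + y) (T (x + y)) = cinner x (T x) + cinner y (T y) + cinner x (T y) + cinner y (T x)"
    by (simp add: lin_opD[OF assms] cinner_add_left cinner_add_right)
  show "cinner (x + \<i> *\<^sub>C y) (T (x + \<i> *\<^sub>C y)) = cinner x (T x) + cinner y (T y)
        + \<i> * cinner x (T y) - \<i> * cinner y (T x)"
    by (simp add: lin_opD[OF assms] cinner_add_left cinner_add_right cinner_scaleC_left
        cinner_scaleC_right algebra_simps)
qed

lemma form_real_herm:
  assumes "lin_op T" and "\<And>x. Im (cinner x (T x)) = 0"
  shows "herm T"
  unfolding herm_def
proof (intro allI)
  fix x y
  define al where "al = cinner x (T y)"
  define be where "be = cinner y (T x)"
  have 1: "Im (al + be) = 0"
    using assms(2)[of "x + y"] assms(2)[of x] assms(2)[of y] polar_expand(1)[OF assms(1), of x y]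
    by (simp add: al_def be_def)
  have 2: "Re (al - be) = 0"
    using assms(2)[of "x + \<i> *\<^sub>C y"] assms(2)[of x] assms(2)[of y] polar_expand(2)[OF assms(1), of x y]
    by (simp add: al_def be_def)
  have "cnj be = al" using 1 2 by (simp add: complex_eq_iff)
  then show "cinner (T x) y = cinner x (T y)"
    by (metis al_def be_def cinner_commute)
qed

lemma zero_form:
  assumes "lin_op T" and "\<And>x. cinner x (T x) = 0"
  shows "T y = 0"
proof -
  have "cinner x (T y) = 0" for x
  proof -
    define al where "al = cinner x (T y)"
    define be where "be = cinner y (T x)"
    have 1: "al + be = 0"
      using assms(2)[of "x + y"] assms(2)[of x] assms(2)[of y] polar_expand(1)[OF assms(1), of x y]
      by (simp add: al_def be_def)
    have 2: "\<i> * al - \<i> * be = 0"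
      using assms(2)[of "x + \<i> *\<^sub>C y"] assms(2)[of x] assms(2)[of y] polar_expand(2)[OF assms(1), of x y]
      by (simp add: al_def be_def)
    from 1 2 have "al = 0" by (simp add: algebra_simps)
    then show ?thesis by (simp add: al_def)
  qed
  then show ?thesis by (rule cinner_zero_ext2)
qed

lemma positive_herm: "positive_op T \<Longrightarrow> herm T"
  unfolding positive_op_def by (auto intro: form_real_herm bounded_lin)

lemma positive_form: "positive_op T \<Longrightarrow> cinner x (T x) = complex_of_real (Re (cinner x (T x)))"
  unfolding positive_op_def by (simp add: complex_eq_iff)

lemma positive_Re: "positive_op T \<Longrightarrow> Re (cinner x (T x)) \<ge> 0"
  unfolding positive_op_def by blast

lemma positive_zero:
  assumes "positive_op T" and "Re (cinner y (T y)) = 0"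
  shows "T y = 0"
proof -
  have lin: "lin_op T" using assms(1) by (simp add: positive_op_def bounded_lin)
  have "(cmod (cinner (T y) (T y)))^2 \<le> Re (cinner (T y) (T (T y))) * Re (cinner y (T y))"
    by (rule cs_form[OF lin positive_herm[OF assms(1)] positive_Re[OF assms(1)]])
  then have "cinner (T y) (T y) = 0" using assms(2) by simp
  then show ?thesis by (simp add: cinner_self_eq_zero)
qed

lemma op_le_antisym:
  assumes "op_le A B" and "op_le B A" shows "A = B"
proof -
  have lin: "lin_op (\<lambda>x. B x - A x)" using assms by (auto simp: op_le_def intro: lin_diff bounded_lin)
  have "cinner x (B x - A x) = 0" for x
  proof -
    have "Re (cinner x (B x - A x)) \<ge> 0" "Im (cinner x (B x - A x)) = 0"
      using assms(1) unfolding op_le_def positive_op_def by auto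
    moreover have "Re (cinner x (A x - B x)) \<ge> 0"
      using assms(2) unfolding op_le_def positive_op_def by auto
    moreover have "cinner x (A x - B x) = - cinner x (B x - A x)"
      by (simp add: cinner_diff_right)
    ultimately show ?thesis by (simp add: complex_eq_iff)
  qed
  then have "B x - A x = 0" for x using zero_form[OF lin] by blast
  then show ?thesis by auto
qed

lemma herm_idem_form:
  assumes "herm T" and "\<And>x. T (T x) = T x"
  shows "cinner x (T x) = complex_of_real ((cnorm (T x))^2)"
proof -
  have "cinner x (T x) = cinner x (T (T x))" using assms(2) by simp
  also have "\<dots> = cinner (T x) (T x)" using hermD[OF assms(1)] by simp
  finally show ?thesis by (simp add: cinner_self_cnorm)
qed

lemma herm_idem_contr:
  assumes "herm T" and "\<And>x. T (T x) = T x"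
  shows "cnorm (T x) \<le> cnorm x"
proof -
  have "(cnorm (T x))^2 = Re (cinner x (T x))" using herm_idem_form[OF assms] by simp
  also have "\<dots> \<le> cnorm x * cnorm (T x)" by (rule cs_Re)
  finally have "cnorm (T x) * cnorm (T x) \<le> cnorm x * cnorm (T x)" by (simp add: power2_eq_square)
  then show ?thesis
    by (metis cnorm_ge0 linorder_not_le mult_le_cancel_right order_less_le)
qed

lemma herm_idem_positive:
  assumes "bounded_op T" "herm T" and "\<And>x. T (T x) = T x"
  shows "positive_op T"
  unfolding positive_op_def using assms herm_idem_form[OF assms(2,3)] by simp

section \<open>von Neumann algebra facts\<close>

lemma vn_bounded: "von_neumann_algebra M \<Longrightarrow> T \<in> M \<Longrightarrow> bounded_op T"
  unfolding von_neumann_algebra_def commutant_def by blast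

lemma projD:
  assumes "von_neumann_algebra M" and "q \<in> projections M"
  shows "bounded_op q" "herm q" "\<And>x. q (q x) = q x" "lin_op q"
proof -
  show b: "bounded_op q" using assms vn_bounded by (auto simp: projections_def)
  show "herm q" using adj_eq_herm[OF b] assms(2) by (auto simp: projections_def)
  show "q (q x) = q x" for x using assms(2) unfolding projections_def
    by (metis (mono_tags, lifting) comp_apply mem_Collect_eq)
  show "lin_op q" using b by (rule bounded_lin)
qed

lemma zero_in_M:
  assumes "von_neumann_algebra M" shows "zero_op \<in> M"
proof -
  have "zero_op \<in> commutant (commutant M)"
    unfolding commutant_def
  proof (intro CollectI conjI ballI bounded_zero)
    fix A assume "A \<in> {T. bounded_op T \<and> (\<forall>A\<in>M. T \<circ> A = A \<circ> T)}"
    then have "lin_op A" using bounded_lin by blast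
    then show "zero_op \<circ> A = A \<circ> zero_op" by (auto simp: zero_op_def lin_opD)
  qed
  then show ?thesis using assms by (simp add: von_neumann_algebra_def)
qed

lemma herm_zero: "herm (zero_op :: 'a::chilbert \<Rightarrow> 'a)"
  by (simp add: herm_def zero_op_def)

lemma zero_proj: "von_neumann_algebra M \<Longrightarrow> zero_op \<in> projections M"
  unfolding projections_def using zero_in_M adj_herm[OF bounded_zero herm_zero]
  by (auto simp: zero_op_def)

lemma positive_zero_op: "positive_op (zero_op :: 'a::chilbert \<Rightarrow> 'a)"
  using bounded_zero by (simp add: positive_op_def zero_op_def)

lemma op_le_zero_proj:
  assumes "von_neumann_algebra M" "r \<in> projections M" shows "op_le zero_op r"
proof -
  have "positive_op r" using herm_idem_positive projD[OF assms] by blast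
  then show ?thesis using projD(1)[OF assms] bounded_zero by (simp add: op_le_def zero_op_def)
qed

lemma proj_sup_zero:
  assumes vn: "von_neumann_algebra M" and S: "S \<subseteq> {zero_op}"
  shows "proj_sup M S = zero_op"
  unfolding proj_sup_def
proof (rule the_equality)
  have zz: "op_le zero_op (zero_op::'a\<Rightarrow>'a)" using op_le_zero_proj[OF vn zero_proj[OF vn]] .
  show "zero_op \<in> projections M \<and> (\<forall>q\<in>S. op_le q zero_op) \<and>
      (\<forall>r\<in>projections M. (\<forall>q\<in>S. op_le q r) \<longrightarrow> op_le zero_op r)"
    using zero_proj[OF vn] S zz op_le_zero_proj[OF vn] by auto
  fix p assume p: "p \<in> projections M \<and> (\<forall>q\<in>S. op_le q p) \<and>
      (\<forall>r\<in>projections M. (\<forall>q\<in>S. op_le q r) \<longrightarrow> op_le p r)"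
  then have "op_le p zero_op" using zero_proj[OF vn] S zz by blast
  moreover have "op_le zero_op p" using op_le_zero_proj[OF vn] p by blast
  ultimately show "p = zero_op" by (rule op_le_antisym)
qed

lemma proj_sup_max:
  assumes vn: "von_neumann_algebra M" and PS: "P \<in> S" and Pp: "P \<in> projections M"
    and up: "\<And>q. q \<in> S \<Longrightarrow> op_le q P"
  shows "proj_sup M S = P"
  unfolding proj_sup_def
proof (rule the_equality)
  show "P \<in> projections M \<and> (\<forall>q\<in>S. op_le q P) \<and>
      (\<forall>r\<in>projections M. (\<forall>q\<in>S. op_le q r) \<longrightarrow> op_le P r)"
    using Pp up PS by blast
  fix p assume p: "p \<in> projections M \<and> (\<forall>q\<in>S. op_le q p) \<and>
      (\<forall>r\<in>projections M. (\<forall>q\<in>S. op_le q r) \<longrightarrow> op_le p r)"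
  then have "op_le p P" using Pp up by blast
  moreover have "op_le P p" using p PS by blast
  ultimately show "p = P" by (rule op_le_antisym)
qed

lemma le_proj:
  assumes q: "bounded_op q" "herm q" "\<And>x. q (q x) = q x"
    and P: "bounded_op P" "herm P" "\<And>x. P (P x) = P x"
    and Pq: "\<And>x. P (q x) = q x"
  shows "op_le q P"
proof -
  have qP: "q (P x) = q x" for x
  proof (rule cinner_ext2)
    fix y
    show "cinner y (q (P x)) = cinner y (q x)"
      using hermD[OF q(2)] hermD[OF P(2)] Pq by metis
  qed
  have "cinner x (P x - q x) = complex_of_real ((cnorm (P x))^2 - (cnorm (q x))^2)" for x
    using herm_idem_form[OF q(2,3)] herm_idem_form[OF P(2,3)] by (simp add: cinner_diff_right)
  moreover have "cnorm (q x) \<le> cnorm (P x)" for x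
    using herm_idem_contr[OF q(2,3), of "P x"] qP by simp
  ultimately have "Im (cinner x (P x - q x)) = 0 \<and> Re (cinner x (P x - q x)) \<ge> 0" for x
    by (simp add: power_mono)
  then show ?thesis using q(1) P(1) bounded_diff[OF P(1) q(1)]
    by (simp add: op_le_def positive_op_def)
qed

section \<open>Unit interval\<close>

lemma unitD:
  assumes "a \<in> unit_interval M"
  shows "a \<in> M" "bounded_op a" "positive_op a" "herm a" "lin_op a"
    "Re (cinner x (a x)) \<ge> 0" "Re (cinner x (a x)) \<le> (cnorm x)^2"
    "Im (cinner x (a x)) = 0"
proof -
  have le0: "op_le zero_op a" and le1: "op_le a id" and "a \<in> M"
    using assms by (auto simp: unit_interval_def)
  then show "a \<in> M" by simp
  show b: "bounded_op a" using le1 by (simp add: op_le_def)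
  show p: "positive_op a" using le0 by (simp add: op_le_def zero_op_def)
  show "herm a" using p by (rule positive_herm)
  show "lin_op a" using b by (rule bounded_lin)
  show "Re (cinner x (a x)) \<ge> 0" "Im (cinner x (a x)) = 0" using p by (auto simp: positive_op_def)
  have "Re (cinner x (x - a x)) \<ge> 0" using le1 by (simp add: op_le_def positive_op_def)
  then show "Re (cinner x (a x)) \<le> (cnorm x)^2" by (simp add: cinner_diff_right cnorm_sq)
qed

lemma contr_of_form:
  assumes "positive_op T" and "\<And>x. Re (cinner x (T x)) \<le> (cnorm x)^2"
  shows "cnorm (T x) \<le> cnorm x"
proof -
  have lin: "lin_op T" using assms(1) by (simp add: positive_op_def bounded_lin)
  have "(cmod (cinner (T x) (T x)))^2 \<le> Re (cinner (T x) (T (T x))) * Re (cinner x (T x))"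
    by (rule cs_form[OF lin positive_herm[OF assms(1)] positive_Re[OF assms(1)]])
  also have "\<dots> \<le> (cnorm (T x))^2 * (cnorm x)^2"
    using assms(2) positive_Re[OF assms(1)] by (simp add: mult_mono)
  also have "cmod (cinner (T x) (T x)) = (cnorm (T x))^2"
    unfolding cinner_self_cnorm norm_of_real by simp
  finally have h: "(cnorm (T x))^2 * (cnorm (T x))^2 \<le> (cnorm (T x))^2 * (cnorm x)^2"
    by (simp add: power2_eq_square[of "(cnorm (T x))^2"])
  have "(cnorm (T x))^2 \<le> (cnorm x)^2"
  proof (cases "(cnorm (T x))^2 = 0")
    case True then show ?thesis using zero_le_power2[of "cnorm x"] by linarith
  next
    case False
    have "(cnorm (T x))^2 \<ge> 0" by (rule zero_le_power2)
    then have pos: "(cnorm (T x))^2 > 0" using False by linarith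
    show ?thesis using h by (simp only: mult_le_cancel_left_pos[OF pos])
  qed
  then show ?thesis by (rule power2_le_imp_le) simp
qed

lemma unit_contr: "a \<in> unit_interval M \<Longrightarrow> cnorm (a x) \<le> cnorm x"
  using contr_of_form unitD by metis

lemma fix_lemma:
  assumes "cnorm (T y) \<le> cnorm y" and "Re (cinner y (T y)) \<ge> (cnorm y)^2"
  shows "T y = y"
proof -
  have "Re (cinner (T y) y) = Re (cinner y (T y))" using cinner_commute[of "T y" y] by simp
  then have "(cnorm (T y - y))^2 \<le> 0"
    using cnorm_diff_sq[of "T y" y] assms power_mono[OF assms(1) cnorm_ge0, of 2] by linarith
  then show ?thesis by simp
qed

section \<open>Kernel projections lie in M\<close>

lemma ker_csub:
  assumes "bounded_op g" shows "csub {x. g x = 0}"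
  unfolding csub_def
proof (intro conjI ballI allI impI)
  have lin: "lin_op g" using assms by (rule bounded_lin)
  show "0 \<in> {x. g x = 0}" by (simp add: lin_opD[OF lin])
  show "x + y \<in> {x. g x = 0}" if "x \<in> {x. g x = 0}" "y \<in> {x. g x = 0}" for x y
    using that by (simp add: lin_opD[OF lin])
  show "c *\<^sub>C x \<in> {x. g x = 0}" if "x \<in> {x. g x = 0}" for c x
    using that by (simp add: lin_opD[OF lin])
  fix X L assume X: "\<forall>n. X n \<in> {x. g x = 0}" and c: "conv X L"
  obtain K where K: "\<And>x. cnorm (g x) \<le> K * cnorm x" using assms by (auto simp: bounded_op_def)
  have "conv (\<lambda>n. g (X n)) (g L)" by (rule conv_bounded_op[OF lin K c])
  then have "conv (\<lambda>n. 0) (g L)" using X by simp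
  then show "L \<in> {x. g x = 0}" using conv_unique[OF _ conv_const] by fastforce
qed

lemma ker_proj_in_M:
  assumes vn: "von_neumann_algebra M" and g: "bounded_op g" "herm g"
    and comm: "\<And>T. T \<in> commutant M \<Longrightarrow> T \<circ> g = g \<circ> T"
  shows "proj {x. g x = 0} \<in> projections M"
proof -
  define K where "K = {x. g x = 0}"
  have K: "csub K" unfolding K_def using ker_csub[OF g(1)] .
  define P where "P = proj K"
  have Pb: "bounded_op P" unfolding P_def using proj_bounded[OF K] .
  have Ph: "herm P" unfolding P_def using proj_herm[OF K] .
  have Pl: "lin_op P" using Pb by (rule bounded_lin)
  have glin: "lin_op g" using g(1) by (rule bounded_lin)
  have "P \<in> commutant (commutant M)"
    unfolding commutant_def
  proof (intro CollectI conjI ballI Pb)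
    fix T assume "T \<in> {T. bounded_op T \<and> (\<forall>A\<in>M. T \<circ> A = A \<circ> T)}"
    then have T: "T \<in> commutant M" by (simp add: commutant_def)
    have Tb: "bounded_op T" using T by (simp add: commutant_def)
    have Tl: "lin_op T" using Tb by (rule bounded_lin)
    have Tg: "T (g x) = g (T x)" for x using comm[OF T] by (metis comp_apply)
    define S where "S = adj T"
    have S: "cinner (S x) y = cinner x (T y)" for x y unfolding S_def by (rule adj_char[OF Tb])
    have Sg: "S (g x) = g (S x)" for x
    proof (rule cinner_ext2)
      fix y
      have "cinner y (S (g x)) = cnj (cinner (S (g x)) y)" by (metis cinner_commute)
      also have "\<dots> = cnj (cinner (g x) (T y))" by (simp add: S)
      also have "cinner (g x) (T y) = cinner x (g (T y))" by (rule hermD[OF g(2)])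
      also have "\<dots> = cinner x (T (g y))" by (simp add: Tg)
      also have "\<dots> = cinner (S x) (g y)" by (simp add: S)
      also have "\<dots> = cinner (g (S x)) y" by (simp add: hermD[OF g(2)])
      finally show "cinner y (S (g x)) = cinner y (g (S x))" by (metis cinner_commute)
    qed
    show "P \<circ> T = T \<circ> P"
    proof
      fix x
      have 1: "T (P x) \<in> K"
      proof -
        have "P x \<in> K" unfolding P_def by (rule proj_prop(1)[OF K])
        then show ?thesis by (simp add: K_def Tg[symmetric] lin_opD[OF Tl])
      qed
      have 2: "cinner k (T (x - P x)) = 0" if "k \<in> K" for k
      proof -
        have S0: "S 0 = 0"
        proof (rule cinner_zero_ext2)
          fix y
          have "cinner (S 0) y = 0" by (simp add: S)
          then show "cinner y (S 0) = 0" by (metis cinner_commute complex_cnj_zero)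
        qed
        have "S k \<in> K" using that by (simp add: K_def Sg[symmetric] S0)
        then have "cinner (S k) (x - P x) = 0" unfolding P_def by (rule proj_prop(2)[OF K])
        then show ?thesis by (simp add: S)
      qed
      have "T x = T (P x) + T (x - P x)"
        using lin_opD(1)[OF Tl, of "P x" "x - P x"] by simp
      then have "P (T x) = P (T (P x)) + P (T (x - P x))"
        using lin_opD(1)[OF Pl, of "T (P x)" "T (x - P x)"] by simp
      also have "P (T (P x)) = T (P x)" unfolding P_def using proj_on_K[OF K 1[unfolded P_def]] .
      also have "P (T (x - P x)) = 0" unfolding P_def using proj_orth_zero[OF K 2] by (simp add: P_def)
      finally show "(P \<circ> T) x = (T \<circ> P) x" by simp
    qed
  qed
  then have "P \<in> M" using vn by (simp add: von_neumann_algebra_def)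
  moreover have "P \<circ> P = P" unfolding P_def using proj_idem[OF K] by (auto simp: fun_eq_iff)
  moreover have "adj P = P" using adj_herm[OF Pb Ph] .
  ultimately show ?thesis by (simp add: projections_def P_def K_def)
qed


lemma strict_kernels:
  assumes vn: "von_neumann_algebra M" and a: "a \<in> unit_interval M" and st: "strict_in M a"
  shows "\<And>y. a y = 0 \<Longrightarrow> y = 0" and "\<And>y. a y = y \<Longrightarrow> y = 0"
proof -
  have aM: "a \<in> M" and ab: "bounded_op a" and ah: "herm a" and al: "lin_op a"
    using unitD[OF a] by auto
  have comm_a: "T \<circ> a = a \<circ> T" if "T \<in> commutant M" for T
    using that aM by (simp add: commutant_def)
  define K where "K = {x. a x = 0}"
  have K: "csub K" unfolding K_def by (rule ker_csub[OF ab])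
  define P where "P = proj K"
  have Pp: "P \<in> projections M" unfolding P_def K_def by (rule ker_proj_in_M[OF vn ab ah comm_a])
  note PD = projD[OF vn Pp]
  have PK: "P x = x" if "a x = 0" for x unfolding P_def using proj_on_K[OF K] that by (simp add: K_def)
  have Pa: "P \<circ> a = zero_op"
  proof
    fix z
    show "(P \<circ> a) z = zero_op z"
    proof -
      have "P (a z) = 0"
      proof (rule cinner_zero_ext2)
        fix w
        have "a (P w) = 0" using proj_prop(1)[OF K] by (simp add: P_def K_def)
        then have "cinner (a (P w)) z = 0" by simp
        then show "cinner w (P (a z)) = 0" using hermD[OF PD(2)] hermD[OF ah] by metis
      qed
      then show ?thesis by (simp add: zero_op_def)
    qed
  qed
  have "proj_sup M {q \<in> projections M. q \<circ> a = zero_op} = P"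
  proof (rule proj_sup_max[OF vn])
    show "P \<in> {q \<in> projections M. q \<circ> a = zero_op}" using Pp Pa by simp
    show "P \<in> projections M" by (rule Pp)
    fix q assume q: "q \<in> {q \<in> projections M. q \<circ> a = zero_op}"
    then have qp: "q \<in> projections M" and qa: "\<And>z. q (a z) = 0"
      by (auto simp: zero_op_def fun_eq_iff)
    note qD = projD[OF vn qp]
    have "a (q x) = 0" for x
    proof (rule cinner_zero_ext2)
      fix w
      have "cinner w (a (q x)) = cinner (q (a w)) x" using hermD[OF qD(2)] hermD[OF ah] by metis
      then show "cinner w (a (q x)) = 0" using qa by simp
    qed
    then show "op_le q P" using le_proj[OF qD(1-3) PD(1-3)] PK by blast
  qed
  then have "P = zero_op" using st by (simp add: strict_in_def null_n_def)
  then show "\<And>y. a y = 0 \<Longrightarrow> y = 0" using PK by (metis zero_op_def)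
next
  have aM: "a \<in> M" and ab: "bounded_op a" and ah: "herm a" and al: "lin_op a"
    using unitD[OF a] by auto
  define g where "g = (\<lambda>x. x - a x)"
  have gb: "bounded_op g" unfolding g_def using bounded_diff[OF bounded_id ab] by simp
  have gh: "herm g" unfolding g_def herm_def using hermD[OF ah] by (simp add: cinner_diff_left cinner_diff_right)
  have comm_g: "T \<circ> g = g \<circ> T" if "T \<in> commutant M" for T
  proof -
    have "T \<circ> a = a \<circ> T" using that aM by (simp add: commutant_def)
    moreover have "lin_op T" using that by (simp add: commutant_def bounded_lin)
    ultimately show ?thesis by (auto simp: g_def fun_eq_iff lin_opD dest: fun_cong)
  qed
  define K where "K = {x. g x = 0}"
  have K: "csub K" unfolding K_def by (rule ker_csub[OF gb])
  define P where "P = proj K"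
  have Pp: "P \<in> projections M" unfolding P_def K_def by (rule ker_proj_in_M[OF vn gb gh comm_g])
  note PD = projD[OF vn Pp]
  have PK: "P x = x" if "a x = x" for x unfolding P_def using proj_on_K[OF K] that by (simp add: K_def g_def)
  have aP: "a (P x) = P x" for x using proj_prop(1)[OF K] by (simp add: P_def K_def g_def)
  have Pa: "op_le P a"
  proof -
    have "Im (cinner x (a x - P x)) = 0 \<and> Re (cinner x (a x - P x)) \<ge> 0" for x
    proof -
      define u where "u = P x"
      define v where "v = x - P x"
      have xuv: "x = u + v" by (simp add: u_def v_def)
      have uK: "u \<in> K" unfolding u_def P_def by (rule proj_prop(1)[OF K])
      have uv: "cinner u v = 0" unfolding u_def v_def P_def by (rule proj_prop(2)[OF K proj_prop(1)[OF K]])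
      have vu: "cinner v u = 0" using uv by (metis cinner_commute complex_cnj_zero)
      have au: "a u = u" using uK by (simp add: K_def g_def)
      have uav: "cinner u (a v) = 0" using hermD[OF ah, of u v] au uv by simp
      have "cinner x (a x) = cinner u u + cinner v (a v)"
        unfolding xuv by (simp add: lin_opD[OF al] au cinner_add_left cinner_add_right uav vu)
      moreover have "cinner x (P x) = cinner u u"
      proof -
        have "cinner x (P x) = cinner (u + v) u" by (simp only: u_def[symmetric] xuv[symmetric])
        then show ?thesis using vu by (simp add: cinner_add_left)
      qed
      ultimately have "cinner x (a x - P x) = cinner v (a v)" by (simp add: cinner_diff_right)
      then show ?thesis using unitD(6,8)[OF a, of v] by simp
    qed
    then show ?thesis using PD(1) ab bounded_diff[OF ab PD(1)]
      by (simp add: op_le_def positive_op_def)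
  qed
  have "proj_sup M {q \<in> projections M. op_le q a} = P"
  proof (rule proj_sup_max[OF vn])
    show "P \<in> {q \<in> projections M. op_le q a}" using Pp Pa by simp
    show "P \<in> projections M" by (rule Pp)
    fix q assume q: "q \<in> {q \<in> projections M. op_le q a}"
    then have qp: "q \<in> projections M" and qa: "op_le q a" by auto
    note qD = projD[OF vn qp]
    have "a (q x) = q x" for x
    proof (rule fix_lemma)
      show "cnorm (a (q x)) \<le> cnorm (q x)" by (rule unit_contr[OF a])
      have "Re (cinner (q x) (a (q x) - q (q x))) \<ge> 0" using qa by (simp add: op_le_def positive_op_def)
      moreover have "cinner (q x) (q (q x)) = complex_of_real ((cnorm (q x))^2)"
        using qD(3) by (simp add: cinner_self_cnorm)
      ultimately show "Re (cinner (q x) (a (q x))) \<ge> (cnorm (q x))^2"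
        by (simp add: cinner_diff_right)
    qed
    then show "op_le q P" using le_proj[OF qD(1-3) PD(1-3)] PK by blast
  qed
  then have "P = zero_op" using st by (simp add: strict_in_def support_s_def)
  then show "\<And>y. a y = y \<Longrightarrow> y = 0" using PK by (metis zero_op_def)
qed


lemma scaleC_sum: "r *\<^sub>C sum f A = (\<Sum>i\<in>A. r *\<^sub>C (f i :: 'a::chilbert))"
  by (induction A rule: infinite_finite_induct) (auto simp: scaleC_add_right)

lemma lin_sum: "lin_op T \<Longrightarrow> T (sum f A) = (\<Sum>i\<in>A. T (f i))"
  by (induction A rule: infinite_finite_induct) (auto simp: lin_opD)

lemma herm_form_real: "herm T \<Longrightarrow> Im (cinner x (T x)) = 0"
proof -
  assume h: "herm T"
  have "cinner x (T x) = cnj (cinner x (T x))"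
    using hermD[OF h, of x x] cinner_commute[of "T x" x] by simp
  then show ?thesis by (metis cnj.sel(2) neg_equal_zero)
qed

lemma lin_funpow: "lin_op c \<Longrightarrow> lin_op (c ^^ k)"
  by (induction k) (auto simp: lin_op_def)

lemma funpow_comm: "lin_op T \<Longrightarrow> (\<And>x. T (c x) = c (T x)) \<Longrightarrow> T ((c ^^ k) x) = (c ^^ k) (T x)"
  by (induction k) auto

definition opp :: "('a::chilbert \<Rightarrow> 'a) \<Rightarrow> real poly \<Rightarrow> 'a \<Rightarrow> 'a" where
  "opp c p x = (\<Sum>k<Suc (degree p). complex_of_real (coeff p k) *\<^sub>C (c ^^ k) x)"

lemma opp_bound:
  assumes "degree p < N"
  shows "opp c p x = (\<Sum>k<N. complex_of_real (coeff p k) *\<^sub>C (c ^^ k) x)"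
  unfolding opp_def
proof (rule sum.mono_neutral_left)
  show "finite {..<N}" by simp
  show "{..<Suc (degree p)} \<subseteq> {..<N}" using assms by auto
  show "\<forall>i\<in>{..<N} - {..<Suc (degree p)}. complex_of_real (coeff p i) *\<^sub>C (c ^^ i) x = 0"
    by (auto simp: coeff_eq_0)
qed

lemma opp_add: "opp c (p + q) x = opp c p x + opp c q x"
proof -
  define N where "N = Suc (max (degree p) (degree q))"
  have dpq: "degree (p + q) < N" unfolding N_def using degree_add_le[of p "max (degree p) (degree q)" q]
    by simp
  have dp: "degree p < N" and dq: "degree q < N" unfolding N_def by auto
  show ?thesis
    unfolding opp_bound[OF dpq] opp_bound[OF dp] opp_bound[OF dq]
    by (simp add: scaleC_add_left sum.distrib)
qed

lemma opp_smult: "opp c (smult r p) x = complex_of_real r *\<^sub>C opp c p x"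
proof -
  have d: "degree (smult r p) < Suc (degree p)" by (simp add: le_imp_less_Suc)
  show ?thesis
    unfolding opp_bound[OF d] opp_def scaleC_sum by (simp add: scaleC_scaleC)
qed

lemma opp_zero[simp]: "opp c 0 x = 0"
  by (simp add: opp_def)

lemma opp_pCons:
  assumes "lin_op c"
  shows "opp c (pCons r p) x = complex_of_real r *\<^sub>C x + c (opp c p x)"
proof -
  define N where "N = Suc (degree p)"
  have d: "degree (pCons r p) < Suc N" unfolding N_def using degree_pCons_le[of r p] by simp
  have "opp c (pCons r p) x = (\<Sum>k<Suc N. complex_of_real (coeff (pCons r p) k) *\<^sub>C (c ^^ k) x)"
    by (rule opp_bound[OF d])
  also have "\<dots> = complex_of_real r *\<^sub>C x + (\<Sum>k<N. complex_of_real (coeff p k) *\<^sub>C c ((c ^^ k) x))"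
    unfolding sum.lessThan_Suc_shift by simp
  also have "(\<Sum>k<N. complex_of_real (coeff p k) *\<^sub>C c ((c ^^ k) x)) = c (opp c p x)"
    unfolding opp_def N_def lin_sum[OF assms] by (simp add: lin_opD[OF assms])
  finally show ?thesis .
qed

lemma opp_const:
  assumes "lin_op c" shows "opp c [:r:] x = complex_of_real r *\<^sub>C x"
  using opp_pCons[OF assms, of r 0] by (simp add: lin_opD[OF assms])

lemma opp_X:
  assumes "lin_op c" shows "opp c [:0, 1:] x = c x"
  using opp_pCons[OF assms, of 0 "[:1:]"] opp_const[OF assms, of 1] by (simp add: scaleC_one)

lemma opp_mult:
  assumes "lin_op c" shows "opp c (p * q) x = opp c p (opp c q x)"
proof (induction p arbitrary: x)
  case 0
  then show ?case by simp
next
  case (pCons a p)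
  have "opp c (pCons a p * q) x = complex_of_real a *\<^sub>C opp c q x + c (opp c (p * q) x)"
    by (simp add: opp_add opp_smult opp_pCons[OF assms])
  also have "\<dots> = opp c (pCons a p) (opp c q x)"
    by (simp add: opp_pCons[OF assms] pCons.IH)
  finally show ?case .
qed

lemma opp_lin: assumes "lin_op c" shows "lin_op (opp c p)"
proof (induction p)
  case 0
  then show ?case by (simp add: lin_op_def)
next
  case (pCons a p)
  show ?case unfolding lin_op_def
    by (simp add: opp_pCons[OF assms] lin_opD[OF pCons.IH] lin_opD[OF assms]
        scaleC_add_right scaleC_scaleC mult.commute algebra_simps)
qed

lemma opp_comm:
  assumes "lin_op c" "lin_op T" "\<And>x. T (c x) = c (T x)"
  shows "T (opp c p x) = opp c p (T x)"
proof (induction p arbitrary: x)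
  case 0
  then show ?case by (simp add: lin_opD[OF assms(2)])
next
  case (pCons a p)
  then show ?case by (simp add: opp_pCons[OF assms(1)] lin_opD[OF assms(2)] assms(3))
qed

lemma opp_herm:
  assumes "lin_op c" "herm c" shows "herm (opp c p)"
proof (induction p)
  case 0
  then show ?case by (simp add: herm_def)
next
  case (pCons a p)
  show ?case unfolding herm_def
  proof (intro allI)
    fix x y
    have "cinner (c (opp c p x)) y = cinner x (c (opp c p y))"
    proof -
      have "cinner (c (opp c p x)) y = cinner (opp c p x) (c y)" by (rule hermD[OF assms(2)])
      also have "\<dots> = cinner x (opp c p (c y))" by (rule hermD[OF pCons.IH])
      also have "opp c p (c y) = c (opp c p y)"
        using opp_comm[OF assms(1) assms(1)] by simp
      finally show ?thesis .
    qed
    then show "cinner (opp c (pCons a p) x) y = cinner x (opp c (pCons a p) y)"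
      by (simp add: opp_pCons[OF assms(1)] cinner_add_left cinner_add_right
          cinner_scaleC_left cinner_scaleC_right)
  qed
qed

lemma funpow_herm: "lin_op c \<Longrightarrow> herm c \<Longrightarrow> herm (c ^^ k)"
proof (induction k)
  case 0 then show ?case by (simp add: herm_def)
next
  case (Suc k)
  show ?case unfolding herm_def
  proof (intro allI)
    fix x y
    have "cinner (c ((c ^^ k) x)) y = cinner ((c ^^ k) x) (c y)" by (rule hermD[OF Suc.prems(2)])
    also have "\<dots> = cinner x ((c ^^ k) (c y))" by (rule hermD[OF Suc.IH[OF Suc.prems]])
    also have "(c ^^ k) (c y) = c ((c ^^ k) y)" by (metis funpow_swap1)
    finally show "cinner ((c ^^ Suc k) x) y = cinner x ((c ^^ Suc k) y)" by simp
  qed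
qed

lemma funpow_pos:
  assumes "lin_op c" "herm c" "\<And>x. Re (cinner x (c x)) \<ge> 0"
  shows "Re (cinner x ((c ^^ k) x)) \<ge> 0"
proof -
  have "\<forall>x. Re (cinner x ((c ^^ k) x)) \<ge> 0 \<and> Re (cinner x ((c ^^ Suc k) x)) \<ge> 0"
  proof (induction k)
    case 0 then show ?case using assms(3) by simp
  next
    case (Suc k)
    have "Re (cinner x ((c ^^ Suc (Suc k)) x)) \<ge> 0" for x
    proof -
      have "(c ^^ Suc (Suc k)) x = c ((c ^^ k) (c x))" by (simp add: funpow_swap1)
      then have "cinner x ((c ^^ Suc (Suc k)) x) = cinner (c x) ((c ^^ k) (c x))"
        using hermD[OF assms(2)] by metis
      then show ?thesis using Suc.IH by simp
    qed
    then show ?case using Suc.IH by blast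
  qed
  then show ?thesis by blast
qed

definition nn :: "real poly \<Rightarrow> bool" where
  "nn p \<longleftrightarrow> (\<forall>k. coeff p k \<ge> 0)"

lemma nn_add: "nn p \<Longrightarrow> nn q \<Longrightarrow> nn (p + q)"
  by (simp add: nn_def)

lemma nn_mult: "nn p \<Longrightarrow> nn q \<Longrightarrow> nn (p * q)"
  unfolding nn_def coeff_mult by (auto intro!: sum_nonneg)

lemma nn_const: "r \<ge> 0 \<Longrightarrow> nn [:r:]"
  by (simp add: nn_def coeff_pCons split: nat.split)

lemma nn_X: "nn [:0, 1:]"
  by (simp add: nn_def coeff_pCons split: nat.split)

lemma opp_pos:
  assumes "lin_op c" "herm c" "\<And>x. Re (cinner x (c x)) \<ge> 0" and "nn p"
  shows "Re (cinner x (opp c p x)) \<ge> 0"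
proof -
  have "cinner x (opp c p x) = (\<Sum>k<Suc (degree p). complex_of_real (coeff p k) * cinner x ((c ^^ k) x))"
    unfolding opp_def cinner_sum_right by (simp add: cinner_scaleC_right)
  then have "Re (cinner x (opp c p x)) = (\<Sum>k<Suc (degree p). coeff p k * Re (cinner x ((c ^^ k) x)))"
    by simp
  also have "\<dots> \<ge> 0"
    using assms(4) funpow_pos[OF assms(1-3)] unfolding nn_def
    by (intro sum_nonneg mult_nonneg_nonneg) auto
  finally show ?thesis .
qed


primrec Yp :: "nat \<Rightarrow> real poly" where
  "Yp 0 = 0"
| "Yp (Suc n) = [:1/2:] * ([:0, 1:] + Yp n * Yp n)"

lemma nn_Yp: "nn (Yp n)"
proof (induction n)
  case 0 then show ?case by (simp add: nn_def)
next
  case (Suc n)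
  have "nn ([:1/2:] * ([:0, 1:] + Yp n * Yp n))"
    by (intro nn_mult nn_add nn_const nn_X Suc) simp
  then show ?case by (simp only: Yp.simps)
qed

lemma nn_Yp_step: "nn (Yp (Suc n) - Yp n)"
proof (induction n)
  case 0 then show ?case using nn_Yp[of 1] by simp
next
  case (Suc n)
  have "Yp (Suc (Suc n)) - Yp (Suc n) = [:1/2:] * ((Yp (Suc n) - Yp n) * (Yp (Suc n) + Yp n))"
    by (simp only: Yp.simps(2)[of "Suc n"] Yp.simps(2)[of n]) (simp add: algebra_simps)
  moreover have "nn (Yp (Suc n) + Yp n)" using nn_Yp nn_add by blast
  moreover have "nn [:1/2:]" by (rule nn_const) simp
  ultimately show ?case using Suc nn_mult by metis
qed

lemma nn_Yp_mono: "n \<le> m \<Longrightarrow> nn (Yp m - Yp n)"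
proof (induction m rule: dec_induct)
  case base then show ?case by (simp add: nn_def)
next
  case (step m)
  have "Yp (Suc m) - Yp n = (Yp (Suc m) - Yp m) + (Yp m - Yp n)" by simp
  then show ?case using step nn_Yp_step nn_add by metis
qed

context
  fixes a :: "'a::chilbert \<Rightarrow> 'a"
  assumes a_b: "bounded_op a" and a_p: "positive_op a" and a_1: "\<And>x. Re (cinner x (a x)) \<le> (cnorm x)^2"
begin

definition cA :: "'a \<Rightarrow> 'a" where "cA x = x - a x"
definition yA :: "nat \<Rightarrow> 'a \<Rightarrow> 'a" where "yA n = opp cA (Yp n)"
definition ylim :: "'a \<Rightarrow> 'a" where "ylim x = (SOME L. conv (\<lambda>n. yA n x) L)"
definition sA :: "'a \<Rightarrow> 'a" where "sA x = x - ylim x"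

lemma a_lin: "lin_op a" using a_b by (rule bounded_lin)
lemma a_herm: "herm a" using a_p by (rule positive_herm)

lemma c_lin: "lin_op cA"
  unfolding cA_def using lin_diff[OF lin_id a_lin] by (simp add: id_def)

lemma c_herm: "herm cA"
  unfolding herm_def cA_def using hermD[OF a_herm] by (simp add: cinner_diff_left cinner_diff_right)

lemma c_pos: "Re (cinner x (cA x)) \<ge> 0"
  using a_1[of x] by (simp add: cA_def cinner_diff_right cnorm_sq)

lemma c_contr: "cnorm (cA x) \<le> cnorm x"
proof (rule contr_of_form)
  show "positive_op cA"
    unfolding positive_op_def
  proof (intro conjI allI)
    show "bounded_op cA" unfolding cA_def using bounded_diff[OF bounded_id a_b] by (simp add: id_def)
    show "Im (cinner x (cA x)) = 0" for x using herm_form_real[OF c_herm] .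
    show "Re (cinner x (cA x)) \<ge> 0" for x by (rule c_pos)
  qed
  show "Re (cinner x (cA x)) \<le> (cnorm x)^2" for x
    using positive_Re[OF a_p, of x] by (simp add: cA_def cinner_diff_right cnorm_sq)
qed

lemma y_lin: "lin_op (yA n)" unfolding yA_def by (rule opp_lin[OF c_lin])
lemma y_herm: "herm (yA n)" unfolding yA_def by (rule opp_herm[OF c_lin c_herm])

lemma y_rec: "yA (Suc n) x = (1/2) *\<^sub>C (cA x + yA n (yA n x))"
  unfolding yA_def Yp.simps
  by (simp add: opp_smult opp_mult[OF c_lin] opp_add opp_const[OF c_lin] opp_X[OF c_lin])

lemma y_contr: "cnorm (yA n x) \<le> cnorm x"
proof (induction n arbitrary: x)
  case 0 then show ?case by (simp add: yA_def)
next
  case (Suc n)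
  have "cnorm (yA (Suc n) x) = (1/2) * cnorm (cA x + yA n (yA n x))"
    by (simp add: y_rec cnorm_scaleC)
  also have "\<dots> \<le> (1/2) * (cnorm (cA x) + cnorm (yA n (yA n x)))"
    using cnorm_triangle by (intro mult_left_mono) auto
  also have "\<dots> \<le> (1/2) * (cnorm x + cnorm x)"
    using c_contr[of x] Suc.IH[of "yA n x"] Suc.IH[of x] by (intro mult_left_mono) auto
  finally show ?case by simp
qed

lemma y_form_le: "Re (cinner x (yA n x)) \<le> (cnorm x)^2"
proof -
  have "Re (cinner x (yA n x)) \<le> cnorm x * cnorm (yA n x)" by (rule cs_Re)
  also have "\<dots> \<le> cnorm x * cnorm x" using y_contr by (intro mult_left_mono) auto
  finally show ?thesis by (simp add: power2_eq_square)
qed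

lemma y_pos: "Re (cinner x (yA n x)) \<ge> 0"
  unfolding yA_def by (rule opp_pos[OF c_lin c_herm c_pos nn_Yp])

lemma D_eq: "opp cA (Yp m - Yp n) x = yA m x - yA n x"
proof -
  have "opp cA ((Yp m - Yp n) + Yp n) x = opp cA (Yp m - Yp n) x + opp cA (Yp n) x"
    by (rule opp_add)
  then show ?thesis unfolding yA_def by simp
qed

lemma D_bound:
  assumes "n \<le> m"
  shows "(cnorm (yA m x - yA n x))^4 \<le> 8 * (cnorm x)^2 * (Re (cinner x (yA m x)) - Re (cinner x (yA n x)))"
proof -
  define D where "D = opp cA (Yp m - Yp n)"
  have Dx: "D z = yA m z - yA n z" for z unfolding D_def by (rule D_eq)
  have Dl: "lin_op D" unfolding D_def by (rule opp_lin[OF c_lin])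
  have Dh: "herm D" unfolding D_def by (rule opp_herm[OF c_lin c_herm])
  have Dp: "Re (cinner z (D z)) \<ge> 0" for z unfolding D_def
    by (rule opp_pos[OF c_lin c_herm c_pos nn_Yp_mono[OF assms]])
  have D2: "cnorm (D z) \<le> 2 * cnorm z" for z
    using cnorm_triangle[of "yA m z" "- yA n z"] y_contr[of m z] y_contr[of n z]
    by (simp add: Dx cnorm_minus)
  have "(cmod (cinner (D x) (D x)))^2 \<le> Re (cinner (D x) (D (D x))) * Re (cinner x (D x))"
    by (rule cs_form[OF Dl Dh Dp])
  moreover have "cmod (cinner (D x) (D x)) = (cnorm (D x))^2"
    unfolding cinner_self_cnorm norm_of_real by simp
  moreover have "Re (cinner (D x) (D (D x))) \<le> 8 * (cnorm x)^2"
  proof -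
    have "Re (cinner (D x) (D (D x))) \<le> cnorm (D x) * cnorm (D (D x))" by (rule cs_Re)
    also have "\<dots> \<le> (2 * cnorm x) * (2 * (2 * cnorm x))"
      using D2[of x] D2[of "D x"] by (intro mult_mono) auto
    finally show ?thesis by (simp add: power2_eq_square)
  qed
  moreover have "Re (cinner x (D x)) = Re (cinner x (yA m x)) - Re (cinner x (yA n x))"
    by (simp add: Dx cinner_diff_right)
  moreover have "Re (cinner x (D x)) \<ge> 0" by (rule Dp)
  ultimately have "((cnorm (D x))^2)^2 \<le> 8 * (cnorm x)^2 * (Re (cinner x (yA m x)) - Re (cinner x (yA n x)))"
    by (metis (no_types, lifting) mult_right_mono order_trans)
  then show ?thesis by (simp add: Dx power_mult[symmetric])
qed

lemma y_cauchy: "\<exists>L. conv (\<lambda>n. yA n x) L"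
proof (rule cauchy_conv)
  define f where "f n = Re (cinner x (yA n x))" for n
  have inc: "incseq f"
  proof (rule incseq_SucI)
    fix n
    have "Re (cinner x (opp cA (Yp (Suc n) - Yp n) x)) \<ge> 0"
      by (rule opp_pos[OF c_lin c_herm c_pos nn_Yp_step])
    then show "f n \<le> f (Suc n)" unfolding D_eq f_def cinner_diff_right by simp
  qed
  have bdd: "bdd_above (range f)" unfolding f_def
    by (rule bdd_aboveI[of _ "(cnorm x)^2"]) (auto simp: y_form_le)
  have "Cauchy f" using LIMSEQ_incseq_SUP[OF bdd inc] by (rule LIMSEQ_imp_Cauchy)
  define B where "B = 8 * (cnorm x)^2 + 1"
  have B: "B > 0" by (simp add: B_def add_nonneg_pos)
  fix e :: real assume e: "e > 0"
  have "e^4 / B > 0" using e B by simp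
  then obtain N where N: "\<And>m n. m \<ge> N \<Longrightarrow> n \<ge> N \<Longrightarrow> \<bar>f m - f n\<bar> < e^4 / B"
    using \<open>Cauchy f\<close> unfolding Cauchy_def dist_real_def by metis
  have main: "cnorm (yA m x - yA n x) < e" if "m \<ge> N" "n \<ge> N" "n \<le> m" for m n
  proof -
    have fmn: "f m - f n \<ge> 0" using inc \<open>n \<le> m\<close> by (simp add: incseq_def)
    have "(cnorm (yA m x - yA n x))^4 \<le> 8 * (cnorm x)^2 * (f m - f n)"
      using D_bound[OF \<open>n \<le> m\<close>] by (simp add: f_def)
    also have "\<dots> \<le> B * (f m - f n)" using fmn by (intro mult_right_mono) (auto simp: B_def)
    also have "\<dots> < B * (e^4 / B)" using N[OF that(1,2)] fmn B by (intro mult_strict_left_mono) auto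
    also have "\<dots> = e^4" using B by simp
    finally show ?thesis using e by (simp add: power_less_imp_less_base)
  qed
  show "\<exists>N. \<forall>m\<ge>N. \<forall>n\<ge>N. cnorm (yA m x - yA n x) < e"
  proof (intro exI allI impI)
    fix m n assume "m \<ge> N" "n \<ge> N"
    then show "cnorm (yA m x - yA n x) < e"
      using main[of m n] main[of n m] cnorm_minus_commute[of "yA m x" "yA n x"]
      by (cases "n \<le> m") auto
  qed
qed

lemma ylim_conv: "conv (\<lambda>n. yA n x) (ylim x)"
  unfolding ylim_def using y_cauchy someI_ex by metis

lemma ylim_lin: "lin_op ylim"
  unfolding lin_op_def
proof (intro conjI allI)
  fix x z
  have "conv (\<lambda>n. yA n x + yA n z) (ylim x + ylim z)" by (rule conv_add[OF ylim_conv ylim_conv])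
  then have "conv (\<lambda>n. yA n (x + z)) (ylim x + ylim z)" by (simp add: lin_opD[OF y_lin])
  then show "ylim (x + z) = ylim x + ylim z" using conv_unique ylim_conv by metis
next
  fix r x
  have "conv (\<lambda>n. r *\<^sub>C yA n x) (r *\<^sub>C ylim x)" by (rule conv_scaleC[OF ylim_conv])
  then have "conv (\<lambda>n. yA n (r *\<^sub>C x)) (r *\<^sub>C ylim x)" by (simp add: lin_opD[OF y_lin])
  then show "ylim (r *\<^sub>C x) = r *\<^sub>C ylim x" using conv_unique ylim_conv by metis
qed

lemma ylim_contr: "cnorm (ylim x) \<le> cnorm x"
  using conv_cnorm[OF ylim_conv[of x]] y_contr
  by (intro LIMSEQ_le_const2) auto

lemma ylim_form: "Im (cinner x (ylim x)) = 0" "Re (cinner x (ylim x)) \<ge> 0"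
  "Re (cinner x (ylim x)) \<le> (cnorm x)^2"
proof -
  have t: "(\<lambda>n. cinner x (yA n x)) \<longlonglongrightarrow> cinner x (ylim x)" by (rule conv_cinner[OF ylim_conv])
  have "(\<lambda>n. Im (cinner x (yA n x))) \<longlonglongrightarrow> Im (cinner x (ylim x))" by (rule tendsto_Im[OF t])
  moreover have "(\<lambda>n. Im (cinner x (yA n x))) = (\<lambda>n. 0)" using herm_form_real[OF y_herm] by auto
  ultimately show "Im (cinner x (ylim x)) = 0" using LIMSEQ_unique tendsto_const by metis
  have r: "(\<lambda>n. Re (cinner x (yA n x))) \<longlonglongrightarrow> Re (cinner x (ylim x))" by (rule tendsto_Re[OF t])
  show "Re (cinner x (ylim x)) \<ge> 0" using r y_pos by (intro LIMSEQ_le_const) auto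
  show "Re (cinner x (ylim x)) \<le> (cnorm x)^2" using r y_form_le by (intro LIMSEQ_le_const2) auto
qed

lemma ylim_herm: "herm ylim"
  by (rule form_real_herm[OF ylim_lin ylim_form(1)])

lemma ylim_comm:
  assumes "bounded_op T" and "\<And>x. T (a x) = a (T x)"
  shows "T (ylim x) = ylim (T x)"
proof -
  have Tl: "lin_op T" using assms(1) by (rule bounded_lin)
  obtain K where K: "\<And>x. cnorm (T x) \<le> K * cnorm x" using assms(1) by (auto simp: bounded_op_def)
  have Tc: "T (cA x) = cA (T x)" for x by (simp add: cA_def lin_opD[OF Tl] assms(2))
  have "conv (\<lambda>n. T (yA n x)) (T (ylim x))" by (rule conv_bounded_op[OF Tl K ylim_conv])
  moreover have "T (yA n x) = yA n (T x)" for n unfolding yA_def by (rule opp_comm[OF c_lin Tl Tc])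
  ultimately have "conv (\<lambda>n. yA n (T x)) (T (ylim x))" by simp
  then show ?thesis using conv_unique ylim_conv by metis
qed

lemma ylim_fix: "ylim x = (1/2) *\<^sub>C (cA x + ylim (ylim x))"
proof -
  have "conv (\<lambda>n. yA (Suc n) x) (ylim x)"
    using conv_shift[of "\<lambda>n. yA n x" "ylim x"] ylim_conv[of x] by simp
  moreover have "conv (\<lambda>n. yA (Suc n) x) ((1/2) *\<^sub>C (cA x + ylim (ylim x)))"
  proof -
    have "conv (\<lambda>n. yA n (yA n x)) (ylim (ylim x))"
    proof (rule conv_squeeze)
      show "cnorm (yA n (yA n x) - ylim (ylim x)) \<le> cnorm (yA n x - ylim x) + cnorm (yA n (ylim x) - ylim (ylim x))" for n
      proof -
        have "yA n (yA n x) - ylim (ylim x) = yA n (yA n x - ylim x) + (yA n (ylim x) - ylim (ylim x))"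
          by (simp add: lin_opD[OF y_lin])
        then have "cnorm (yA n (yA n x) - ylim (ylim x)) \<le> cnorm (yA n (yA n x - ylim x)) + cnorm (yA n (ylim x) - ylim (ylim x))"
          using cnorm_triangle by metis
        then show ?thesis using y_contr[of n "yA n x - ylim x"] by linarith
      qed
      show "(\<lambda>n. cnorm (yA n x - ylim x) + cnorm (yA n (ylim x) - ylim (ylim x))) \<longlonglongrightarrow> 0"
        using tendsto_add[OF ylim_conv[of x, unfolded conv_def] ylim_conv[of "ylim x", unfolded conv_def]]
        by simp
    qed
    then have "conv (\<lambda>n. (1/2) *\<^sub>C (cA x + yA n (yA n x))) ((1/2) *\<^sub>C (cA x + ylim (ylim x)))"
      by (intro conv_scaleC conv_add conv_const)
    then show ?thesis by (simp add: y_rec)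
  qed
  ultimately show ?thesis by (rule conv_unique)
qed

lemma s_sq: "sA (sA x) = a x"
proof -
  have "(2::complex) *\<^sub>C ylim x = cA x + ylim (ylim x)"
    using arg_cong[OF ylim_fix[of x], of "\<lambda>v. (2::complex) *\<^sub>C v"] by (simp add: scaleC_scaleC scaleC_one)
  then have "ylim (ylim x) = ylim x + ylim x - cA x" by (simp add: scaleC_two algebra_simps)
  then show ?thesis by (simp add: sA_def lin_opD[OF ylim_lin] cA_def algebra_simps)
qed

lemma s_pos: "positive_op sA"
  unfolding positive_op_def
proof (intro conjI allI)
  show "bounded_op sA"
  proof (rule bounded_opI[of _ 2])
    show "lin_op sA" unfolding sA_def using lin_diff[OF lin_id ylim_lin] by (simp add: id_def)
    show "cnorm (sA x) \<le> 2 * cnorm x" for x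
      using cnorm_triangle[of x "- ylim x"] ylim_contr[of x] by (simp add: sA_def cnorm_minus)
  qed
  fix x
  show "Im (cinner x (sA x)) = 0" using ylim_form(1)[of x] by (simp add: sA_def cinner_diff_right)
  show "Re (cinner x (sA x)) \<ge> 0" using ylim_form(3)[of x] by (simp add: sA_def cinner_diff_right cnorm_sq)
qed

lemma s_comm:
  assumes "bounded_op T" and "\<And>x. T (a x) = a (T x)"
  shows "T (sA x) = sA (T x)"
  using ylim_comm[OF assms] bounded_lin[OF assms(1)] by (simp add: sA_def lin_opD)

lemma sqrt_unique:
  assumes d: "positive_op d" and dd: "d \<circ> d = a"
  shows "d = sA"
proof -
  have db: "bounded_op d" using d by (simp add: positive_op_def)
  have dl: "lin_op d" using db by (rule bounded_lin)
  have dh: "herm d" using d by (rule positive_herm)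
  have sp: "positive_op sA" by (rule s_pos)
  have sl: "lin_op sA" using sp by (simp add: positive_op_def bounded_lin)
  have sh: "herm sA" using sp by (rule positive_herm)
  have dda: "d (d x) = a x" for x using dd by (metis comp_apply)
  have da: "d (a x) = a (d x)" for x by (simp flip: dda)
  have ds: "d (sA x) = sA (d x)" for x by (rule s_comm[OF db da])
  define e where "e x = sA x - d x" for x
  have el: "lin_op e" unfolding e_def using lin_diff[OF sl dl] by simp
  have eh: "herm e" unfolding e_def herm_def using hermD[OF sh] hermD[OF dh]
    by (simp add: cinner_diff_left cinner_diff_right)
  have "e (e x) = 0" for x
  proof -
    define w where "w = e x"
    have "sA w + d w = 0"
      unfolding w_def e_def by (simp add: lin_opD[OF sl] lin_opD[OF dl] s_sq dda ds)
    then have sum0: "Re (cinner w (sA w)) + Re (cinner w (d w)) = 0"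
      by (metis cinner_add_right cinner_zero_right plus_complex.sel(1) zero_complex.sel(1))
    have "Re (cinner w (sA w)) = 0" "Re (cinner w (d w)) = 0"
      using sum0 positive_Re[OF sp, of w] positive_Re[OF d, of w] by linarith+
    then have "sA w = 0" "d w = 0" using positive_zero[OF sp] positive_zero[OF d] by blast+
    moreover have "e (e x) = sA w - d w" by (simp add: e_def w_def)
    ultimately show ?thesis by simp
  qed
  then have "cinner (e x) (e x) = 0" for x using hermD[OF eh, of x "e x"] by simp
  then have "e x = 0" for x by (simp add: cinner_self_eq_zero)
  then show ?thesis by (auto simp: e_def fun_eq_iff)
qed

lemma op_sqrt_eq: "op_sqrt a = sA"
  unfolding op_sqrt_def
proof (rule the_equality)
  show "positive_op sA \<and> sA \<circ> sA = a" using s_pos s_sq by (auto simp: fun_eq_iff)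
  fix b assume "positive_op b \<and> b \<circ> b = a"
  then show "b = sA" using sqrt_unique by blast
qed

lemma op_sqrt_props: "positive_op (op_sqrt a)" "\<And>x. op_sqrt a (op_sqrt a x) = a x"
  using s_pos s_sq op_sqrt_eq by auto

end


lemma sup_zero_by:
  assumes vn: "von_neumann_algebra M"
    and h: "\<And>q z. q \<in> projections M \<Longrightarrow> P q \<Longrightarrow> q z = 0"
  shows "proj_sup M {q \<in> projections M. P q} = zero_op"
proof (rule proj_sup_zero[OF vn])
  show "{q \<in> projections M. P q} \<subseteq> {zero_op}"
    using h by (auto simp: zero_op_def fun_eq_iff)
qed

lemma le_form:
  assumes vn: "von_neumann_algebra M" and q: "q \<in> projections M" and le: "op_le q T"
  shows "Re (cinner (q z) (T (q z))) \<ge> (cnorm (q z))^2"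
proof -
  have "Re (cinner (q z) (T (q z) - q (q z))) \<ge> 0" using le by (simp add: op_le_def positive_op_def)
  moreover have "q (q z) = q z" using projD(3)[OF vn q] .
  ultimately show ?thesis by (simp add: cinner_diff_right cnorm_sq)
qed

lemma null_form:
  assumes vn: "von_neumann_algebra M" and q: "q \<in> projections M"
    and hT: "herm T" and qT: "q \<circ> T = zero_op"
  shows "T (q z) = 0"
proof (rule cinner_zero_ext2)
  fix w
  have "cinner w (T (q z)) = cinner (q (T w)) z"
    using hermD[OF projD(2)[OF vn q]] hermD[OF hT] by metis
  also have "q (T w) = 0" using qT by (metis comp_apply zero_op_def)
  finally show "cinner w (T (q z)) = 0" by simp
qed

theorem lemma2p3:
  fixes M :: "('h::chilbert \<Rightarrow> 'h) set" and a b :: "'h \<Rightarrow> 'h"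
  assumes "von_neumann_algebra M"
    and "a \<in> unit_interval M" and "b \<in> unit_interval M"
    and "strict_in M a" and "strict_in M b"
  shows "strict_in M (op_sqrt a) \<and> (a \<circ> b = b \<circ> a \<longrightarrow> strict_in M (a \<circ> b))"
proof -
  note vn = assms(1) and a = assms(2) and b = assms(3)
  have a0: "\<And>y. a y = 0 \<Longrightarrow> y = 0" and a1: "\<And>y. a y = y \<Longrightarrow> y = 0"
    using strict_kernels[OF vn a assms(4)] by blast+
  have b0: "\<And>y. b y = 0 \<Longrightarrow> y = 0" and b1: "\<And>y. b y = y \<Longrightarrow> y = 0"
    using strict_kernels[OF vn b assms(5)] by blast+
  have ab: "bounded_op a" "positive_op a" "\<And>x. Re (cinner x (a x)) \<le> (cnorm x)^2"
    using unitD[OF a] by auto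
  have bb: "bounded_op b" "positive_op b" "\<And>x. Re (cinner x (b x)) \<le> (cnorm x)^2"
    using unitD[OF b] by auto
  define c where "c = op_sqrt a"
  have cp: "positive_op c" and cc: "\<And>x. c (c x) = a x"
    unfolding c_def using op_sqrt_props[OF ab] by auto
  have ch: "herm c" using cp by (rule positive_herm)
  have cl: "lin_op c" using cp by (simp add: positive_op_def bounded_lin)
  have ccontr: "cnorm (c x) \<le> cnorm x" for x
  proof -
    have "(cnorm (c x))^2 = Re (cinner x (c (c x)))"
      using hermD[OF ch, of x "c x"] by (simp add: cnorm_sq)
    also have "\<dots> \<le> (cnorm x)^2" using ab(3) by (simp add: cc)
    finally show ?thesis by (rule power2_le_imp_le) simp
  qed
  have part1: "strict_in M c"
    unfolding strict_in_def support_s_def null_n_def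
  proof
    show "proj_sup M {q \<in> projections M. op_le q c} = zero_op"
    proof (rule sup_zero_by[OF vn])
      fix q z assume q: "q \<in> projections M" and le: "op_le q c"
      have "c (q z) = q z" by (rule fix_lemma[of c "q z", OF ccontr le_form[OF vn q le]])
      then have "a (q z) = q z" by (metis cc)
      then show "q z = 0" by (rule a1)
    qed
    show "proj_sup M {q \<in> projections M. q \<circ> c = zero_op} = zero_op"
    proof (rule sup_zero_by[OF vn])
      fix q z assume q: "q \<in> projections M" and qc: "q \<circ> c = zero_op"
      have "c (q z) = 0" by (rule null_form[OF vn q ch qc])
      then have "a (q z) = 0" by (metis cc lin_opD(3)[OF cl])
      then show "q z = 0" by (rule a0)
    qed
  qed
  have part2: "strict_in M (a \<circ> b)"
    unfolding strict_in_def support_s_def null_n_def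
  proof
    show "proj_sup M {q \<in> projections M. op_le q (a \<circ> b)} = zero_op"
    proof (rule sup_zero_by[OF vn])
      fix q z assume q: "q \<in> projections M" and le: "op_le q (a \<circ> b)"
      define y where "y = q z"
      have abc: "cnorm ((a \<circ> b) y) \<le> cnorm y"
        using unit_contr[OF a, of "b y"] unit_contr[OF b, of y] by simp
      have aby: "a (b y) = y"
        using fix_lemma[of "a \<circ> b" y, OF abc le_form[OF vn q le, of z, folded y_def]] by simp
      have nby: "cnorm (b y) = cnorm y"
        using unit_contr[OF a, of "b y"] unit_contr[OF b, of y] aby by simp
      have "b y = y"
      proof (rule fix_lemma)
        show "cnorm (b y) \<le> cnorm y" by (simp add: nby)
        define e where "e = y - b y"
        have bh: "herm b" using unitD[OF b] by blast
        have bl: "lin_op b" using unitD[OF b] by blast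
        have 1: "Re (cinner e (b e)) \<ge> 0" using unitD(6)[OF b] by blast
        have 2: "Re (cinner (b y) (b y - b (b y))) \<ge> 0"
          using bb(3)[of "b y"] by (simp add: cinner_diff_right cnorm_sq)
        have "cinner y (b y) - cinner y (b (b y)) = cinner e (b e) + cinner (b y) (b y - b (b y))"
        proof -
          have "cinner y (b (b y)) = cinner (b y) (b y)" using hermD[OF bh] by metis
          moreover have "cinner (b y) (b e) = cinner y (b (b e))" using hermD[OF bh] by metis
          moreover have "cinner (b y) (b (b y)) = cinner y (b (b (b y)))" using hermD[OF bh] by metis
          ultimately show ?thesis
            by (simp add: e_def lin_opD[OF bl] cinner_diff_left cinner_diff_right)
        qed
        then have "Re (cinner y (b y)) \<ge> Re (cinner y (b (b y)))" using 1 2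
          by (metis add_nonneg_nonneg diff_ge_0_iff_ge minus_complex.sel(1) plus_complex.sel(1))
        moreover have "cinner y (b (b y)) = cinner (b y) (b y)" using hermD[OF bh] by metis
        ultimately have "Re (cinner y (b y)) \<ge> Re (cinner (b y) (b y))" by simp
        moreover have "Re (cinner (b y) (b y)) = (cnorm y)^2" using nby cnorm_sq[of "b y"] by simp
        ultimately show "Re (cinner y (b y)) \<ge> (cnorm y)^2" by linarith
      qed
      then have "a y = y" using aby by simp
      then show "q z = 0" unfolding y_def by (rule a1)
    qed
    show "proj_sup M {q \<in> projections M. q \<circ> (a \<circ> b) = zero_op} = zero_op"
    proof (rule sup_zero_by[OF vn])
      fix q z assume q: "q \<in> projections M" and qc: "q \<circ> (a \<circ> b) = zero_op"
      have "b (a (q z)) = 0"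
      proof (rule cinner_zero_ext2)
        fix w
        have ah: "herm a" and bh: "herm b" using unitD[OF a] unitD[OF b] by blast+
        have "cinner w (b (a (q z))) = cinner (q (a (b w))) z"
          using hermD[OF projD(2)[OF vn q]] hermD[OF ah] hermD[OF bh] by metis
        also have "q (a (b w)) = 0" using qc by (metis comp_apply zero_op_def)
        finally show "cinner w (b (a (q z))) = 0" by simp
      qed
      then show "q z = 0" using a0 b0 by blast
    qed
  qed
  show ?thesis using part1 part2 unfolding c_def by blast
qed


end
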